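(* Let $m,d,L\ge2$ be integers and let $\mathcal{E}=\{\eta_i,\rho_i\}_{i=1}^{d+2}$ be the $m$-qudit ensemble with $\eta_i=\frac{1}{d^m+d}$, $\rho_i=\Psi^m_{i-1}$ for $i=1,\dots,d$; $\eta_{d+1}=\frac{d^m-d}{d^m+d}$, $\rho_{d+1}=\frac{1}{d^m-d}\big(\mathbb{1}^m_d-\sum_{j=0}^{d-1}\Psi^m_j\big)$; $\eta_{d+2}=\frac{d}{d^m+d}$, $\rho_{d+2}=\Phi^m_d$. Let $\mathcal{E}^1=\cdots=\mathcal{E}^L=\mathcal{E}$. Then $$\prod_{l=1}^Lp_{\sf L}(\mathcal{E}^l)=p_{\sf L}\Big(\bigotimes_{l=1}^L\mathcal{E}^l\Big)=p_{\sf SEP}\Big(\bigotimes_{l=1}^L\mathcal{E}^l\Big);$$ in particular the optimal LOCC discrimination of $\bigotimes_{l=1}^L\mathcal{E}^l$ is factorizable. Explicitly, the Hermitian operator $H=\frac{1}{(d^m+d)^L}(\mathbb{1}^m_d)^{\otimes L}$ and the LOCC measurements $\{M^l_i\}_{i=1}^{d+2}$ (all equal to $M_i=\Psi^m_{i-1}$ for $i\le d$, $M_{d+1}=\mathbb{1}^m_d-\sum_{j=0}^{d-1}\Psi^m_j$, $M_{d+2}=0$) satisfy $H-\eta_{\vec c}\rho_{\vec c}\in\mathbb{SEP}^*$ and $\operatorname{Tr}[M_{\vec c}(H-\eta_{\vec c}\rho_{\vec c})]=0$ for all $\vec c$, where $M_{\vec c}=M_{c_1}\otimes\cdots\otimes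 M_{c_L}$.
   Context: $\mathbb{1}^m_d$ is the identity on $(\mathbb{C}^d)^{\otimes m}$ (parties $\mathsf{A}_1,\dots,\mathsf{A}_m$, each holding one $\mathbb{C}^d$), $\Psi^m_i=|i\cdots i\rangle\langle i\cdots i|$, and $\Phi^m_d=\frac1d\sum_{i,j=0}^{d-1}|i\cdots i\rangle\langle j\cdots j|$ is the $m$-qudit GHZ state. For ensembles $\mathcal{E}^l=\{\eta^l_i,\rho^l_i\}_i$, the sequence ensemble $\bigotimes_l\mathcal{E}^l=\{\eta_{\vec c},\rho_{\vec c}\}_{\vec c}$ has $\eta_{\vec c}=\prod_l\eta^l_{c_l}$, $\rho_{\vec c}=\bigotimes_l\rho^l_{c_l}$ for $\vec c=(c_1,\dots,c_L)\in\{1,\dots,d+2\}^L$, and is regarded as an $m$-party ensemble where party $\mathsf{A}_k$ holds the $k$-th qudit of every copy. Separable operators are sums of tensor products over $\mathsf{A}_1,\dots,\mathsf{A}_m$ of positive semidefinite local operators; $\mathbb{SEP}^*$ is the set of Hermitian $E$ with $\operatorname{Tr}(E\sigma)\ge0$ for all separable states $\sigma$. A measurement is separable if all its elements are separable, LOCC if realizable by local operations and classical communication among the $m$ parties; for an ensemble $\{\eta_j,\rho_j\}_j$, $p_{\sf SEP}$ and $p_{\sf L}$ are the maxima of $\sum_j\eta_j\operatorname{Tr}(\rho_jM_j)$ over separable and LOCC measurements respectively. *)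

theory Defs
  imports Complex_Main "HOL-Library.FuncSet"
begin

text \<open>An operator on the Hilbert space with orthonormal basis indexed by a finite set S
  is represented by its matrix entries (only entries on S \<times> S matter).\<close>

type_synonym 'i qop = "'i \<Rightarrow> 'i \<Rightarrow> complex"

definition op_eq :: "'i set \<Rightarrow> 'i qop \<Rightarrow> 'i qop \<Rightarrow> bool" where
  "op_eq S A B \<longleftrightarrow> (\<forall>x\<in>S. \<forall>y\<in>S. A x y = B x y)"

definition mmult :: "'i set \<Rightarrow> 'i qop \<Rightarrow> 'i qop \<Rightarrow> 'i qop" where
  "mmult S A B = (\<lambda>x y. \<Sum>z\<in>S. A x z * B z y)"

definition adj :: "'i qop \<Rightarrow> 'i qop" where
  "adj A = (\<lambda>x y. cnj (A y x))"

definition idop :: "'i qop" where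
  "idop = (\<lambda>x y. if x = y then 1 else 0)"

definition zeroop :: "'i qop" where
  "zeroop = (\<lambda>x y. 0)"

definition tr :: "'i set \<Rightarrow> 'i qop \<Rightarrow> complex" where
  "tr S A = (\<Sum>x\<in>S. A x x)"

definition herm :: "'i set \<Rightarrow> 'i qop \<Rightarrow> bool" where
  "herm S A \<longleftrightarrow> (\<forall>x\<in>S. \<forall>y\<in>S. A x y = cnj (A y x))"

definition psd :: "'i set \<Rightarrow> 'i qop \<Rightarrow> bool" where
  "psd S A \<longleftrightarrow> herm S A \<and>
     (\<forall>v :: 'i \<Rightarrow> complex. 0 \<le> Re (\<Sum>x\<in>S. \<Sum>y\<in>S. cnj (v x) * A x y * v y))"

text \<open>m parties A_0,...,A_{m-1}; party k has local orthonormal basis LB k.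
  A global basis vector is a function x with x k \<in> LB k (tensor product basis).\<close>

definition gbasis :: "nat \<Rightarrow> (nat \<Rightarrow> 'b set) \<Rightarrow> (nat \<Rightarrow> 'b) set" where
  "gbasis m LB = PiE {..<m} LB"

definition lift :: "nat \<Rightarrow> nat \<Rightarrow> 'b qop \<Rightarrow> (nat \<Rightarrow> 'b) qop" where
  "lift m k P = (\<lambda>x y. if (\<forall>j<m. j \<noteq> k \<longrightarrow> x j = y j) then P (x k) (y k) else 0)"

definition prodop :: "nat \<Rightarrow> (nat \<Rightarrow> 'b qop) \<Rightarrow> (nat \<Rightarrow> 'b) qop" where
  "prodop m P = (\<lambda>x y. \<Prod>k<m. P k (x k) (y k))"

definition separable :: "nat \<Rightarrow> (nat \<Rightarrow> 'b set) \<Rightarrow> (nat \<Rightarrow> 'b) qop \<Rightarrow> bool" where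
  "separable m LB A \<longleftrightarrow> (\<exists>(N::nat) P. (\<forall>j<N. \<forall>k<m. psd (LB k) (P j k)) \<and>
     op_eq (gbasis m LB) A (\<lambda>x y. \<Sum>j<N. prodop m (P j) x y))"

definition sep_state :: "nat \<Rightarrow> (nat \<Rightarrow> 'b set) \<Rightarrow> (nat \<Rightarrow> 'b) qop \<Rightarrow> bool" where
  "sep_state m LB \<sigma> \<longleftrightarrow> separable m LB \<sigma> \<and> tr (gbasis m LB) \<sigma> = 1"

definition sep_dual :: "nat \<Rightarrow> (nat \<Rightarrow> 'b set) \<Rightarrow> (nat \<Rightarrow> 'b) qop \<Rightarrow> bool" where
  "sep_dual m LB E \<longleftrightarrow> herm (gbasis m LB) E \<and>
     (\<forall>\<sigma>. sep_state m LB \<sigma> \<longrightarrow>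
        Im (tr (gbasis m LB) (mmult (gbasis m LB) E \<sigma>)) = 0 \<and>
        0 \<le> Re (tr (gbasis m LB) (mmult (gbasis m LB) E \<sigma>)))"

definition povm :: "'i set \<Rightarrow> 'o set \<Rightarrow> ('o \<Rightarrow> 'i qop) \<Rightarrow> bool" where
  "povm S Out M \<longleftrightarrow> (\<forall>i\<in>Out. psd S (M i)) \<and> op_eq S (\<lambda>x y. \<Sum>i\<in>Out. M i x y) idop"

definition sep_meas :: "nat \<Rightarrow> (nat \<Rightarrow> 'b set) \<Rightarrow> 'o set \<Rightarrow> ('o \<Rightarrow> (nat \<Rightarrow> 'b) qop) \<Rightarrow> bool" where
  "sep_meas m LB Out M \<longleftrightarrow> povm (gbasis m LB) Out M \<and> (\<forall>i\<in>Out. separable m LB (M i))"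

text \<open>Either the protocol stops and outputs a fixed
  outcome c, or some party k applies a local instrument with Kraus operators K 0..K (r-1)
  (on its own space), broadcasts the result j, and the parties continue with an LOCC
  protocol Ms j (chosen depending on j).\<close>
inductive locc :: "nat \<Rightarrow> (nat \<Rightarrow> 'b set) \<Rightarrow> 'o set \<Rightarrow> ('o \<Rightarrow> (nat \<Rightarrow> 'b) qop) \<Rightarrow> bool"
  for m :: nat and LB :: "nat \<Rightarrow> 'b set" and Out :: "'o set" where
  stop: "(c::'o) \<in> Out \<Longrightarrow> (\<And>i. i \<in> Out \<Longrightarrow> op_eq (gbasis m LB) (M i) (if i = c then idop else zeroop))
         \<Longrightarrow> locc m LB Out M"
| round: "(k::nat) < m \<Longrightarrow>
     op_eq (LB k) (\<lambda>a b. \<Sum>j<(r::nat). mmult (LB k) (adj (K j)) (K j) a b) idop \<Longrightarrow>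
     (\<And>j. j < r \<Longrightarrow> locc m LB Out (Ms j)) \<Longrightarrow>
     (\<And>i. i \<in> Out \<Longrightarrow> op_eq (gbasis m LB) (M i)
        (\<lambda>x y. \<Sum>j<r. mmult (gbasis m LB)
             (mmult (gbasis m LB) (adj (lift m k (K j))) (Ms j i)) (lift m k (K j)) x y)) \<Longrightarrow>
     locc m LB Out M"

definition succ_prob :: "'i set \<Rightarrow> 'o set \<Rightarrow> ('o \<Rightarrow> real) \<Rightarrow> ('o \<Rightarrow> 'i qop) \<Rightarrow> ('o \<Rightarrow> 'i qop) \<Rightarrow> real" where
  "succ_prob S Out \<eta> \<rho> M = (\<Sum>i\<in>Out. \<eta> i * Re (tr S (mmult S (\<rho> i) (M i))))"

definition p_sep :: "nat \<Rightarrow> (nat \<Rightarrow> 'b set) \<Rightarrow> 'o set \<Rightarrow> ('o \<Rightarrow> real) \<Rightarrow> ('o \<Rightarrow> (nat \<Rightarrow> 'b) qop) \<Rightarrow> real" where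
  "p_sep m LB Out \<eta> \<rho> = Sup {succ_prob (gbasis m LB) Out \<eta> \<rho> M | M. sep_meas m LB Out M}"

definition p_locc :: "nat \<Rightarrow> (nat \<Rightarrow> 'b set) \<Rightarrow> 'o set \<Rightarrow> ('o \<Rightarrow> real) \<Rightarrow> ('o \<Rightarrow> (nat \<Rightarrow> 'b) qop) \<Rightarrow> real" where
  "p_locc m LB Out \<eta> \<rho> = Sup {succ_prob (gbasis m LB) Out \<eta> \<rho> M | M. locc m LB Out M}"

definition qudit_LB :: "nat \<Rightarrow> nat \<Rightarrow> nat set" where
  "qudit_LB d = (\<lambda>_. {..<d})"

definition Psi :: "nat \<Rightarrow> nat \<Rightarrow> (nat \<Rightarrow> nat) qop" where
  "Psi m i = (\<lambda>x y. if (\<forall>k<m. x k = i) \<and> (\<forall>k<m. y k = i) then 1 else 0)"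

definition Phi :: "nat \<Rightarrow> nat \<Rightarrow> (nat \<Rightarrow> nat) qop" where
  "Phi m d = (\<lambda>x y. (1 / of_nat d) *
      (\<Sum>i<d. \<Sum>j<d. if (\<forall>k<m. x k = i) \<and> (\<forall>k<m. y k = j) then 1 else 0))"

definition ens_eta :: "nat \<Rightarrow> nat \<Rightarrow> nat \<Rightarrow> real" where
  "ens_eta m d i =
     (if 1 \<le> i \<and> i \<le> d then 1 / (real d ^ m + real d)
      else if i = d + 1 then (real d ^ m - real d) / (real d ^ m + real d)
      else if i = d + 2 then real d / (real d ^ m + real d)
      else 0)"

definition ens_rho :: "nat \<Rightarrow> nat \<Rightarrow> nat \<Rightarrow> (nat \<Rightarrow> nat) qop" where
  "ens_rho m d i =
     (if 1 \<le> i \<and> i \<le> d then Psi m (i - 1)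
      else if i = d + 1 then
        (\<lambda>x y. (idop x y - (\<Sum>j<d. Psi m j x y)) / (of_real (real d ^ m - real d)))
      else if i = d + 2 then Phi m d
      else zeroop)"

definition meas_M :: "nat \<Rightarrow> nat \<Rightarrow> nat \<Rightarrow> (nat \<Rightarrow> nat) qop" where
  "meas_M m d i =
     (if 1 \<le> i \<and> i \<le> d then Psi m (i - 1)
      else if i = d + 1 then (\<lambda>x y. idop x y - (\<Sum>j<d. Psi m j x y))
      else zeroop)"

text \<open>L copies; party k holds the k-th qudit of every copy, so its local basis is
  {0..<L} \<rightarrow> {0..<d}. A global basis vector X has X k l = digit of qudit k of copy l.\<close>
definition seq_LB :: "nat \<Rightarrow> nat \<Rightarrow> nat \<Rightarrow> (nat \<Rightarrow> nat) set" where
  "seq_LB d L = (\<lambda>_. PiE {..<L} (\<lambda>_. {..<d}))"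

definition seq_outcomes :: "nat \<Rightarrow> nat \<Rightarrow> (nat \<Rightarrow> nat) set" where
  "seq_outcomes d L = PiE {..<L} (\<lambda>_. {1..d+2})"

definition copy_of :: "nat \<Rightarrow> nat \<Rightarrow> (nat \<Rightarrow> nat \<Rightarrow> nat) \<Rightarrow> (nat \<Rightarrow> nat)" where
  "copy_of m l X = (\<lambda>k. if k < m then X k l else undefined)"

definition seq_eta :: "(nat \<Rightarrow> real) \<Rightarrow> nat \<Rightarrow> (nat \<Rightarrow> nat) \<Rightarrow> real" where
  "seq_eta \<eta> L c = (\<Prod>l<L. \<eta> (c l))"

definition seq_op :: "nat \<Rightarrow> nat \<Rightarrow> (nat \<Rightarrow> (nat \<Rightarrow> nat) qop) \<Rightarrow> (nat \<Rightarrow> nat)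
    \<Rightarrow> (nat \<Rightarrow> nat \<Rightarrow> nat) qop" where
  "seq_op m L A c = (\<lambda>X Y. \<Prod>l<L. A (c l) (copy_of m l X) (copy_of m l Y))"

definition seqH :: "nat \<Rightarrow> nat \<Rightarrow> nat \<Rightarrow> (nat \<Rightarrow> nat \<Rightarrow> nat) qop" where
  "seqH m d L = (\<lambda>X Y. of_real (1 / (real d ^ m + real d) ^ L) * idop X Y)"

end

theory Submission
  imports Defs
begin

lemma psd_herm: "psd S P \<Longrightarrow> x\<in>S \<Longrightarrow> y\<in>S \<Longrightarrow> P x y = cnj (P y x)"
  unfolding psd_def herm_def by blast

lemma psd_diag_real: "psd S P \<Longrightarrow> x \<in> S \<Longrightarrow> P x x = complex_of_real (Re (P x x))"
proof -
  assume "psd S P" "x \<in> S"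
  then have "P x x = cnj (P x x)" using psd_herm[OF \<open>psd S P\<close> \<open>x\<in>S\<close> \<open>x\<in>S\<close>] by simp
  then have "Im (P x x) = 0" by (metis cnj.sel(2) neg_equal_zero)
  then show ?thesis by (simp add: complex_eq_iff)
qed

lemma form_two:
  fixes P :: "'i qop"
  assumes "finite S" "a \<in> S" "b \<in> S" "a \<noteq> b"
  shows "(\<Sum>x\<in>S. \<Sum>y\<in>S. cnj ((\<lambda>x. if x = a then u else if x = b then w else 0) x) * P x y
            * (\<lambda>x. if x = a then u else if x = b then w else 0) y)
       = cnj u * P a a * u + cnj u * P a b * w + cnj w * P b a * u + cnj w * P b b * w"
proof -
  let ?v = "(\<lambda>x. if x = a then u else if x = b then w else 0)"
  have inner: "(\<Sum>y\<in>S. cnj (?v x) * P x y * ?v y) = cnj (?v x) * P x a * u + cnj (?v x) * P x b * w" for x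
  proof -
    have "(\<Sum>y\<in>S. cnj (?v x) * P x y * ?v y) = (\<Sum>y\<in>{a,b}. cnj (?v x) * P x y * ?v y)"
    proof (rule sum.mono_neutral_right)
      show "finite S" "{a,b} \<subseteq> S" using assms by auto
      show "\<forall>i\<in>S - {a, b}. cnj (?v x) * P x i * ?v i = 0" by auto
    qed
    then show ?thesis using assms by simp
  qed
  have "(\<Sum>x\<in>S. \<Sum>y\<in>S. cnj (?v x) * P x y * ?v y) = (\<Sum>x\<in>S. cnj (?v x) * P x a * u + cnj (?v x) * P x b * w)"
    by (simp add: inner)
  also have "\<dots> = (\<Sum>x\<in>{a,b}. cnj (?v x) * P x a * u + cnj (?v x) * P x b * w)"
    apply (rule sum.mono_neutral_right) 
    using assms apply simp_all
    done
  also have "\<dots> = cnj u * P a a * u + cnj u * P a b * w + cnj w * P b a * u + cnj w * P b b * w"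
    using assms by (simp add: add.assoc)
  finally show ?thesis .
qed

lemma psd_diag_nonneg:
  assumes "psd S P" "finite S" "a \<in> S"
  shows "0 \<le> Re (P a a)"
proof -
  let ?v = "(\<lambda>x. if x = a then (1::complex) else 0)"
  have "(\<Sum>x\<in>S. \<Sum>y\<in>S. cnj (?v x) * P x y * ?v y) = P a a"
  proof -
    have "(\<Sum>x\<in>S. \<Sum>y\<in>S. cnj (?v x) * P x y * ?v y) = (\<Sum>x\<in>S. if x = a then P a a else 0)"
      by (rule sum.cong) (use assms in \<open>auto simp: if_distrib cong: if_cong\<close>)
    also have "\<dots> = P a a" using assms by simp
    finally show ?thesis .
  qed
  moreover have "0 \<le> Re (\<Sum>x\<in>S. \<Sum>y\<in>S. cnj (?v x) * P x y * ?v y)"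
    using assms(1) unfolding psd_def using spec[of _ ?v] by blast
  ultimately show ?thesis by simp
qed

lemma real_quad_lemma:
  fixes q pa pb :: real
  assumes "q \<ge> 0" "pa \<ge> 0" "\<And>t. 0 \<le> t^2 * q * pa - 2 * t * q + pb"
  shows "q \<le> pa * pb"
proof (cases "pa = 0")
  case True
  show ?thesis
  proof (rule ccontr)
    assume "\<not> q \<le> pa * pb"
    then have "q > 0" using True by simp
    have "0 \<le> ((pb+1)/(2*q))^2 * q * pa - 2 * ((pb+1)/(2*q)) * q + pb" by (rule assms(3))
    also have "\<dots> = -1" using True \<open>q > 0\<close> by (simp add: field_simps)
    finally show False by simp
  qed
next
  case False
  then have pa: "pa > 0" using assms(2) by simp
  have "0 \<le> (1/pa)^2 * q * pa - 2 * (1/pa) * q + pb" by (rule assms(3))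
  also have "\<dots> = (pa * pb - q) / pa" using pa by (simp add: field_simps power2_eq_square)
  finally show ?thesis using pa by (simp add: divide_nonneg_pos zero_le_divide_iff)
qed

lemma quad_expand: "cnj (- complex_of_real t * z) * complex_of_real pa * (- complex_of_real t * z) + cnj (- complex_of_real t * z) * z * 1 + cnj 1 * cnj z * (- complex_of_real t * z) + cnj 1 * complex_of_real pb * 1
  = complex_of_real (t^2 * pa) * (cnj z * z) - complex_of_real (2*t) * (cnj z * z) + complex_of_real pb"
  by (simp add: power2_eq_square algebra_simps)

lemma psd_cs:
  assumes "psd S P" "finite S" "a \<in> S" "b \<in> S"
  shows "(cmod (P a b))^2 \<le> Re (P a a) * Re (P b b)"
proof (cases "a = b")
  case True
  have "P a a = complex_of_real (Re (P a a))" using psd_diag_real[OF assms(1,3)] .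
  then have "cmod (P a a) = \<bar>Re (P a a)\<bar>" by (metis norm_of_real)
  then show ?thesis using True psd_diag_nonneg[OF assms(1,2,3)] by (simp add: power2_eq_square)
next
  case False
  define z where "z = P a b"
  define pa where "pa = Re (P a a)"
  define pb where "pb = Re (P b b)"
  have Paa: "P a a = complex_of_real pa" unfolding pa_def using psd_diag_real[OF assms(1,3)] .
  have Pbb: "P b b = complex_of_real pb" unfolding pb_def using psd_diag_real[OF assms(1,4)] .
  have Pba: "P b a = cnj z" unfolding z_def using psd_herm[OF assms(1,4,3)] .
  have N: "cnj z * z = complex_of_real ((cmod z)^2)" by (metis complex_norm_square mult.commute of_real_power)
  have T: "0 \<le> t^2 * (cmod z)^2 * pa - 2 * t * (cmod z)^2 + pb" for t
  proof -
    let ?u = "- complex_of_real t * z" and ?w = "1::complex"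
    have "0 \<le> Re (\<Sum>x\<in>S. \<Sum>y\<in>S. cnj ((\<lambda>x. if x = a then ?u else if x = b then ?w else 0) x) * P x y
            * (\<lambda>x. if x = a then ?u else if x = b then ?w else 0) y)"
      using assms(1) unfolding psd_def using spec[of _ "(\<lambda>x. if x = a then ?u else if x = b then ?w else 0)"] by blast
    also have "\<dots> = Re (cnj ?u * P a a * ?u + cnj ?u * P a b * ?w + cnj ?w * P b a * ?u + cnj ?w * P b b * ?w)"
      by (simp only: form_two[OF assms(2,3,4) False])
    also have "cnj ?u * P a a * ?u + cnj ?u * P a b * ?w + cnj ?w * P b a * ?u + cnj ?w * P b b * ?w
       = complex_of_real (t^2 * pa) * (cnj z * z) - complex_of_real (2*t) * (cnj z * z) + complex_of_real pb"
      unfolding Paa Pbb Pba z_def[symmetric] by (rule quad_expand)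
    also have "Re (complex_of_real (t^2 * pa) * (cnj z * z) - complex_of_real (2*t) * (cnj z * z) + complex_of_real pb)
       = t^2 * (cmod z)^2 * pa - 2 * t * (cmod z)^2 + pb"
      unfolding N by simp
    finally show ?thesis .
  qed
  have P: "0 \<le> pa" unfolding pa_def by (rule psd_diag_nonneg[OF assms(1,2,3)])
  have "(cmod z)^2 \<le> pa * pb"
    by (rule real_quad_lemma[OF _ P T]) simp
  then show ?thesis unfolding z_def pa_def pb_def .
qed

lemma gbasis_upd:
  assumes "x \<in> gbasis m LB" "k < m" "a \<in> LB k"
  shows "x(k:=a) \<in> gbasis m LB"
  using assms unfolding gbasis_def by (auto simp: PiE_iff extensional_def)

lemma gbasis_out: "x \<in> gbasis m LB \<Longrightarrow> \<not> j < m \<Longrightarrow> x j = undefined"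
  unfolding gbasis_def by (auto simp: PiE_iff extensional_def)

lemma gbasis_in: "x \<in> gbasis m LB \<Longrightarrow> j < m \<Longrightarrow> x j \<in> LB j"
  unfolding gbasis_def by (auto simp: PiE_iff)

lemma gbasis_eqI: "x \<in> gbasis m LB \<Longrightarrow> y \<in> gbasis m LB \<Longrightarrow> (\<And>j. j < m \<Longrightarrow> x j = y j) \<Longrightarrow> x = y"
  by (metis gbasis_out ext)

lemma finite_gbasis: "(\<And>k. k < m \<Longrightarrow> finite (LB k)) \<Longrightarrow> finite (gbasis m LB)"
  unfolding gbasis_def by (rule finite_PiE) auto

lemma SR:
  assumes fin: "\<And>k. k < m \<Longrightarrow> finite (LB k)" and x: "x \<in> gbasis m LB" and k: "k < m"
  shows "(\<Sum>z\<in>gbasis m LB. if (\<forall>j<m. j \<noteq> k \<longrightarrow> z j = x j) then F z else 0)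
       = (\<Sum>a\<in>LB k. F (x(k:=a)))"
proof -
  let ?G = "gbasis m LB"
  have "(\<Sum>z\<in>?G. if (\<forall>j<m. j \<noteq> k \<longrightarrow> z j = x j) then F z else 0)
       = sum F {z\<in>?G. (\<forall>j<m. j \<noteq> k \<longrightarrow> z j = x j)}"
    by (rule sum.inter_filter[symmetric]) (rule finite_gbasis[OF fin])
  also have "{z\<in>?G. (\<forall>j<m. j \<noteq> k \<longrightarrow> z j = x j)} = (\<lambda>a. x(k:=a)) ` LB k"
  proof (rule set_eqI, rule iffI)
    fix z assume "z \<in> {z\<in>?G. (\<forall>j<m. j \<noteq> k \<longrightarrow> z j = x j)}"
    then have z: "z \<in> ?G" "\<forall>j<m. j \<noteq> k \<longrightarrow> z j = x j" by auto
    have "z = x(k := z k)"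
    proof (rule gbasis_eqI[OF z(1) gbasis_upd[OF x k]])
      show "z k \<in> LB k" using gbasis_in[OF z(1) k] .
      fix j assume "j < m" then show "z j = (x(k := z k)) j" using z(2) by auto
    qed
    moreover have "z k \<in> LB k" using gbasis_in[OF z(1) k] .
    ultimately show "z \<in> (\<lambda>a. x(k:=a)) ` LB k" by blast
  next
    fix z assume "z \<in> (\<lambda>a. x(k:=a)) ` LB k"
    then obtain a where a: "a \<in> LB k" "z = x(k:=a)" by blast
    then show "z \<in> {z\<in>?G. (\<forall>j<m. j \<noteq> k \<longrightarrow> z j = x j)}"
      using gbasis_upd[OF x k a(1)] by auto
  qed
  also have "sum F ((\<lambda>a. x(k:=a)) ` LB k) = (\<Sum>a\<in>LB k. F (x(k:=a)))"
  proof (rule sum.reindex[unfolded comp_def])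
    show "inj_on (\<lambda>a. x(k:=a)) (LB k)"
      by (rule inj_onI) (metis fun_upd_same)
  qed
  finally show ?thesis .
qed

lemma CL1:
  assumes fin: "\<And>k. k < m \<Longrightarrow> finite (LB k)" and x: "x \<in> gbasis m LB" and k: "k < m"
  shows "mmult (gbasis m LB) (adj (lift m k K)) A x w = (\<Sum>a\<in>LB k. cnj (K a (x k)) * A (x(k:=a)) w)"
proof -
  have "mmult (gbasis m LB) (adj (lift m k K)) A x w
      = (\<Sum>z\<in>gbasis m LB. if (\<forall>j<m. j \<noteq> k \<longrightarrow> z j = x j) then cnj (K (z k) (x k)) * A z w else 0)"
    unfolding mmult_def adj_def lift_def by (rule sum.cong) auto
  also have "\<dots> = (\<Sum>a\<in>LB k. cnj (K ((x(k:=a)) k) (x k)) * A (x(k:=a)) w)"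
    by (rule SR[OF fin x k])
  finally show ?thesis by simp
qed

lemma CL:
  assumes fin: "\<And>k. k < m \<Longrightarrow> finite (LB k)" and x: "x \<in> gbasis m LB" and y: "y \<in> gbasis m LB" and k: "k < m"
  shows "mmult (gbasis m LB) (mmult (gbasis m LB) (adj (lift m k K)) A) (lift m k K) x y
       = (\<Sum>a\<in>LB k. \<Sum>b\<in>LB k. cnj (K a (x k)) * A (x(k:=a)) (y(k:=b)) * K b (y k))"
proof -
  let ?S = "\<lambda>w. mmult (gbasis m LB) (adj (lift m k K)) A x w"
  have "mmult (gbasis m LB) (mmult (gbasis m LB) (adj (lift m k K)) A) (lift m k K) x y
      = (\<Sum>w\<in>gbasis m LB. if (\<forall>j<m. j \<noteq> k \<longrightarrow> w j = y j) then ?S w * K (w k) (y k) else 0)"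
    unfolding mmult_def[of _ "mmult _ _ _"] lift_def by (rule sum.cong) auto
  also have "\<dots> = (\<Sum>b\<in>LB k. ?S (y(k:=b)) * K ((y(k:=b)) k) (y k))"
    by (rule SR[OF fin y k])
  also have "\<dots> = (\<Sum>b\<in>LB k. (\<Sum>a\<in>LB k. cnj (K a (x k)) * A (x(k:=a)) (y(k:=b))) * K b (y k))"
    by (simp add: CL1[OF fin x k])
  also have "\<dots> = (\<Sum>b\<in>LB k. \<Sum>a\<in>LB k. cnj (K a (x k)) * A (x(k:=a)) (y(k:=b)) * K b (y k))"
    by (simp add: sum_distrib_right)
  also have "\<dots> = (\<Sum>a\<in>LB k. \<Sum>b\<in>LB k. cnj (K a (x k)) * A (x(k:=a)) (y(k:=b)) * K b (y k))"
    by (rule sum.swap)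
  finally show ?thesis .
qed

definition kconj :: "'b set \<Rightarrow> 'b qop \<Rightarrow> 'b qop \<Rightarrow> 'b qop" where
  "kconj S K P = (\<lambda>a' b'. \<Sum>a\<in>S. \<Sum>b\<in>S. cnj (K a a') * P a b * K b b')"

lemma prodop_upd:
  assumes k: "k < m"
  shows "prodop m P (x(k:=a)) (y(k:=b)) = P k a b * (\<Prod>j\<in>{..<m}-{k}. P j (x j) (y j))"
proof -
  have "prodop m P (x(k:=a)) (y(k:=b)) = P k ((x(k:=a)) k) ((y(k:=b)) k) * (\<Prod>j\<in>{..<m}-{k}. P j ((x(k:=a)) j) ((y(k:=b)) j))"
    unfolding prodop_def using k by (subst prod.remove[of _ k]) auto
  also have "(\<Prod>j\<in>{..<m}-{k}. P j ((x(k:=a)) j) ((y(k:=b)) j)) = (\<Prod>j\<in>{..<m}-{k}. P j (x j) (y j))"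
    by (rule prod.cong) auto
  finally show ?thesis by (simp only: fun_upd_same)
qed

lemma prodop_split:
  assumes k: "k < m"
  shows "prodop m P x y = P k (x k) (y k) * (\<Prod>j\<in>{..<m}-{k}. P j (x j) (y j))"
  using prodop_upd[OF k, of P x "x k" y "y k"] by simp

lemma CL_prod:
  assumes fin: "\<And>k. k < m \<Longrightarrow> finite (LB k)" and x: "x \<in> gbasis m LB" and y: "y \<in> gbasis m LB" and k: "k < m"
  shows "mmult (gbasis m LB) (mmult (gbasis m LB) (adj (lift m k K)) (prodop m P)) (lift m k K) x y
       = prodop m (P(k := kconj (LB k) K (P k))) x y"
proof -
  let ?R = "\<Prod>j\<in>{..<m}-{k}. P j (x j) (y j)"
  have "mmult (gbasis m LB) (mmult (gbasis m LB) (adj (lift m k K)) (prodop m P)) (lift m k K) x y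
     = (\<Sum>a\<in>LB k. \<Sum>b\<in>LB k. cnj (K a (x k)) * (P k a b * ?R) * K b (y k))"
  proof -
    have "mmult (gbasis m LB) (mmult (gbasis m LB) (adj (lift m k K)) (prodop m P)) (lift m k K) x y
     = (\<Sum>a\<in>LB k. \<Sum>b\<in>LB k. cnj (K a (x k)) * prodop m P (x(k:=a)) (y(k:=b)) * K b (y k))"
      by (rule CL[OF fin x y k])
    then show ?thesis by (simp only: prodop_upd[OF k])
  qed
  also have "\<dots> = (\<Sum>a\<in>LB k. \<Sum>b\<in>LB k. cnj (K a (x k)) * P k a b * K b (y k)) * ?R"
    apply (simp only: sum_distrib_right)
    apply (intro sum.cong refl)
    apply (simp add: mult_ac)
    done
  also have "\<dots> = prodop m (P(k := kconj (LB k) K (P k))) x y"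
  proof -
    have "(\<Prod>j\<in>{..<m}-{k}. (P(k := kconj (LB k) K (P k))) j (x j) (y j)) = ?R"
      by (rule prod.cong) auto
    moreover have "prodop m (P(k := kconj (LB k) K (P k))) x y = kconj (LB k) K (P k) (x k) (y k) *
        (\<Prod>j\<in>{..<m}-{k}. (P(k := kconj (LB k) K (P k))) j (x j) (y j))"
      using prodop_split[OF k, of "P(k := kconj (LB k) K (P k))"] by simp
    ultimately show ?thesis unfolding kconj_def by simp
  qed
  finally show ?thesis .
qed

lemma psd_kconj:
  assumes "psd S P" "finite S"
  shows "psd S (kconj S K P)"
  unfolding psd_def
proof (intro conjI allI)
  show "herm S (kconj S K P)"
    unfolding herm_def kconj_def
  proof (intro ballI)
    fix x y assume "x \<in> S" "y \<in> S"
    have "cnj (\<Sum>a\<in>S. \<Sum>b\<in>S. cnj (K a y) * P a b * K b x) = (\<Sum>a\<in>S. \<Sum>b\<in>S. K a y * cnj (P a b) * cnj (K b x))"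
      by simp
    also have "\<dots> = (\<Sum>a\<in>S. \<Sum>b\<in>S. K a y * P b a * cnj (K b x))"
      by (intro sum.cong refl) (metis assms(1) psd_herm)
    also have "\<dots> = (\<Sum>b\<in>S. \<Sum>a\<in>S. cnj (K b x) * P b a * K a y)"
      by (subst sum.swap) (simp add: mult_ac)
    finally show "(\<Sum>a\<in>S. \<Sum>b\<in>S. cnj (K a x) * P a b * K b y) = cnj (\<Sum>a\<in>S. \<Sum>b\<in>S. cnj (K a y) * P a b * K b x)"
      by simp
  qed
next
  fix v :: "'a \<Rightarrow> complex"
  define w where "w = (\<lambda>a. \<Sum>a'\<in>S. K a a' * v a')"
  have "(\<Sum>x\<in>S. \<Sum>y\<in>S. cnj (v x) * kconj S K P x y * v y) = (\<Sum>a\<in>S. \<Sum>b\<in>S. cnj (w a) * P a b * w b)"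
  proof -
    have "(\<Sum>x\<in>S. \<Sum>y\<in>S. cnj (v x) * kconj S K P x y * v y)
        = (\<Sum>x\<in>S. \<Sum>y\<in>S. \<Sum>a\<in>S. \<Sum>b\<in>S. cnj (v x) * cnj (K a x) * P a b * K b y * v y)"
      unfolding kconj_def by (simp add: sum_distrib_left sum_distrib_right mult_ac)
    also have "\<dots> = (\<Sum>x\<in>S. \<Sum>a\<in>S. \<Sum>y\<in>S. \<Sum>b\<in>S. cnj (v x) * cnj (K a x) * P a b * K b y * v y)"
      by (rule sum.cong[OF refl], rule sum.swap)
    also have "\<dots> = (\<Sum>a\<in>S. \<Sum>x\<in>S. \<Sum>y\<in>S. \<Sum>b\<in>S. cnj (v x) * cnj (K a x) * P a b * K b y * v y)"
      by (rule sum.swap)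
    also have "\<dots> = (\<Sum>a\<in>S. \<Sum>x\<in>S. \<Sum>b\<in>S. \<Sum>y\<in>S. cnj (v x) * cnj (K a x) * P a b * K b y * v y)"
      by (rule sum.cong[OF refl], rule sum.cong[OF refl], rule sum.swap)
    also have "\<dots> = (\<Sum>a\<in>S. \<Sum>b\<in>S. \<Sum>x\<in>S. \<Sum>y\<in>S. cnj (v x) * cnj (K a x) * P a b * K b y * v y)"
      by (rule sum.cong[OF refl], rule sum.swap)
    also have "\<dots> = (\<Sum>a\<in>S. \<Sum>b\<in>S. cnj (w a) * P a b * w b)"
    proof (intro sum.cong refl)
      fix a b
      have 1: "cnj (w a) = (\<Sum>x\<in>S. cnj (v x) * cnj (K a x))" unfolding w_def by (simp add: mult.commute)
      have 2: "P a b * w b = (\<Sum>y\<in>S. P a b * K b y * v y)" unfolding w_def by (simp add: sum_distrib_left mult.assoc)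
      have "cnj (w a) * P a b * w b = (\<Sum>x\<in>S. cnj (v x) * cnj (K a x)) * (\<Sum>y\<in>S. P a b * K b y * v y)"
        unfolding 1[symmetric] 2[symmetric] by (simp only: mult.assoc)
      also have "\<dots> = (\<Sum>x\<in>S. \<Sum>y\<in>S. (cnj (v x) * cnj (K a x)) * (P a b * K b y * v y))"
        by (rule sum_product)
      also have "\<dots> = (\<Sum>x\<in>S. \<Sum>y\<in>S. cnj (v x) * cnj (K a x) * P a b * K b y * v y)"
        by (intro sum.cong refl) (simp add: mult_ac)
      finally show "(\<Sum>x\<in>S. \<Sum>y\<in>S. cnj (v x) * cnj (K a x) * P a b * K b y * v y) = cnj (w a) * P a b * w b"
        by (rule sym)
    qed
    finally show ?thesis .
  qed
  moreover have "0 \<le> Re (\<Sum>a\<in>S. \<Sum>b\<in>S. cnj (w a) * P a b * w b)"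
    using assms(1) unfolding psd_def by (metis (no_types))
  ultimately show "0 \<le> Re (\<Sum>x\<in>S. \<Sum>y\<in>S. cnj (v x) * kconj S K P x y * v y)" by simp
qed

lemma sum_lessThan_add_split:
  "(\<Sum>j<(a::nat)+b. f j) = (\<Sum>j<a. f j) + (\<Sum>j<b. f (a+j))"
  by (induction b) (simp_all add: add.assoc)

lemma sep_cong:
  assumes "separable m LB A" "op_eq (gbasis m LB) A B"
  shows "separable m LB B"
  using assms unfolding separable_def op_eq_def by metis

lemma sep_zero: "separable m LB (\<lambda>x y. 0)"
  unfolding separable_def op_eq_def by (rule exI[of _ 0]) simp

lemma sep_add:
  assumes "separable m LB A" "separable m LB B"
  shows "separable m LB (\<lambda>x y. A x y + B x y)"
proof -
  obtain N1 :: nat and P1 where 1: "\<forall>j<N1. \<forall>k<m. psd (LB k) (P1 j k)"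
      "op_eq (gbasis m LB) A (\<lambda>x y. \<Sum>j<N1. prodop m (P1 j) x y)"
    using assms(1) unfolding separable_def by auto
  obtain N2 :: nat and P2 where 2: "\<forall>j<N2. \<forall>k<m. psd (LB k) (P2 j k)"
      "op_eq (gbasis m LB) B (\<lambda>x y. \<Sum>j<N2. prodop m (P2 j) x y)"
    using assms(2) unfolding separable_def by auto
  define P where "P = (\<lambda>j. if j < N1 then P1 j else P2 (j - N1))"
  have "\<forall>j<N1+N2. \<forall>k<m. psd (LB k) (P j k)"
    using 1(1) 2(1) unfolding P_def by auto
  moreover have "op_eq (gbasis m LB) (\<lambda>x y. A x y + B x y) (\<lambda>x y. \<Sum>j<N1+N2. prodop m (P j) x y)"
    unfolding op_eq_def
  proof (intro ballI)
    fix x y assume "x \<in> gbasis m LB" "y \<in> gbasis m LB"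
    then have "A x y + B x y = (\<Sum>j<N1. prodop m (P1 j) x y) + (\<Sum>j<N2. prodop m (P2 j) x y)"
      using 1(2) 2(2) unfolding op_eq_def by simp
    also have "\<dots> = (\<Sum>j<N1+N2. prodop m (P j) x y)"
      unfolding sum_lessThan_add_split P_def by simp
    finally show "A x y + B x y = (\<Sum>j<N1+N2. prodop m (P j) x y)" .
  qed
  ultimately show ?thesis unfolding separable_def by blast
qed

lemma sep_sum:
  assumes "finite I" "\<And>j. j \<in> I \<Longrightarrow> separable m LB (A j)"
  shows "separable m LB (\<lambda>x y. \<Sum>j\<in>I. A j x y)"
  using assms
proof (induction I rule: finite_induct)
  case empty
  then show ?case using sep_zero by simp
next
  case (insert a F)
  have "separable m LB (\<lambda>x y. A a x y + (\<Sum>j\<in>F. A j x y))"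
    by (rule sep_add) (use insert in auto)
  then show ?case using insert by simp
qed

lemma psd_idop:
  assumes "finite S"
  shows "psd S idop"
  unfolding psd_def
proof (intro conjI allI)
  show "herm S idop" unfolding herm_def idop_def by auto
next
  fix v :: "'a \<Rightarrow> complex"
  have "(\<Sum>x\<in>S. \<Sum>y\<in>S. cnj (v x) * idop x y * v y) = (\<Sum>x\<in>S. cnj (v x) * v x)"
  proof (rule sum.cong[OF refl])
    fix x assume "x \<in> S"
    have "(\<Sum>y\<in>S. cnj (v x) * idop x y * v y) = (\<Sum>y\<in>S. if y = x then cnj (v x) * v x else 0)"
      by (rule sum.cong) (auto simp: idop_def)
    also have "\<dots> = cnj (v x) * v x" using \<open>x \<in> S\<close> assms by simp
    finally show "(\<Sum>y\<in>S. cnj (v x) * idop x y * v y) = cnj (v x) * v x" .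
  qed
  also have "\<dots> = (\<Sum>x\<in>S. complex_of_real ((cmod (v x))^2))"
    by (rule sum.cong[OF refl]) (metis complex_norm_square mult.commute of_real_power)
  finally show "0 \<le> Re (\<Sum>x\<in>S. \<Sum>y\<in>S. cnj (v x) * idop x y * v y)"
    by (simp add: sum_nonneg)
qed

lemma prodop_idop:
  assumes "x \<in> gbasis m LB" "y \<in> gbasis m LB"
  shows "prodop m (\<lambda>k. idop) x y = idop x y"
proof (cases "x = y")
  case True then show ?thesis unfolding prodop_def idop_def by simp
next
  case False
  then obtain j where j: "j < m" "x j \<noteq> y j" using gbasis_eqI[OF assms] by blast
  have "(\<Prod>k<m. idop (x k) (y k)) = (0::complex)"
    by (rule prod_zero) (use j in \<open>auto simp: idop_def\<close>)
  then show ?thesis using False unfolding prodop_def idop_def by simp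
qed

lemma sep_idop:
  assumes fin: "\<And>k. k < m \<Longrightarrow> finite (LB k)"
  shows "separable m LB idop"
  unfolding separable_def
proof (intro exI conjI)
  show "\<forall>j<(1::nat). \<forall>k<m. psd (LB k) ((\<lambda>j k. idop) j k)" using psd_idop fin by auto
  show "op_eq (gbasis m LB) idop (\<lambda>x y. \<Sum>j<(1::nat). prodop m ((\<lambda>j k. idop) j) x y)"
    unfolding op_eq_def by (simp add: prodop_idop)
qed

lemma sep_kconj:
  assumes fin: "\<And>k. k < m \<Longrightarrow> finite (LB k)" and k: "k < m" and A: "separable m LB A"
  shows "separable m LB (mmult (gbasis m LB) (mmult (gbasis m LB) (adj (lift m k K)) A) (lift m k K))"
proof -
  let ?G = "gbasis m LB"
  obtain N :: nat and P where P: "\<forall>j<N. \<forall>k<m. psd (LB k) (P j k)"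
      "op_eq ?G A (\<lambda>x y. \<Sum>j<N. prodop m (P j) x y)"
    using A unfolding separable_def by auto
  define P' where "P' = (\<lambda>j. (P j)(k := kconj (LB k) K (P j k)))"
  have "\<forall>j<N. \<forall>k'<m. psd (LB k') (P' j k')"
    unfolding P'_def using P(1) psd_kconj fin k by (auto intro!: psd_kconj)
  moreover have "op_eq ?G (mmult ?G (mmult ?G (adj (lift m k K)) A) (lift m k K)) (\<lambda>x y. \<Sum>j<N. prodop m (P' j) x y)"
    unfolding op_eq_def
  proof (intro ballI)
    fix x y assume x: "x \<in> ?G" and y: "y \<in> ?G"
    have "mmult ?G (mmult ?G (adj (lift m k K)) A) (lift m k K) x y
       = (\<Sum>a\<in>LB k. \<Sum>b\<in>LB k. cnj (K a (x k)) * A (x(k:=a)) (y(k:=b)) * K b (y k))"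
      by (rule CL[OF fin x y k])
    also have "\<dots> = (\<Sum>a\<in>LB k. \<Sum>b\<in>LB k. cnj (K a (x k)) * (\<Sum>j<N. prodop m (P j) (x(k:=a)) (y(k:=b))) * K b (y k))"
      using P(2) gbasis_upd[OF x k] gbasis_upd[OF y k] unfolding op_eq_def
      by (intro sum.cong refl) simp
    also have "\<dots> = (\<Sum>j<N. \<Sum>a\<in>LB k. \<Sum>b\<in>LB k. cnj (K a (x k)) * prodop m (P j) (x(k:=a)) (y(k:=b)) * K b (y k))"
    proof -
      have "(\<Sum>a\<in>LB k. \<Sum>b\<in>LB k. cnj (K a (x k)) * (\<Sum>j<N. prodop m (P j) (x(k:=a)) (y(k:=b))) * K b (y k))
          = (\<Sum>a\<in>LB k. \<Sum>b\<in>LB k. \<Sum>j<N. cnj (K a (x k)) * prodop m (P j) (x(k:=a)) (y(k:=b)) * K b (y k))"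
        by (simp add: sum_distrib_left sum_distrib_right)
      also have "\<dots> = (\<Sum>a\<in>LB k. \<Sum>j<N. \<Sum>b\<in>LB k. cnj (K a (x k)) * prodop m (P j) (x(k:=a)) (y(k:=b)) * K b (y k))"
        by (rule sum.cong[OF refl], rule sum.swap)
      also have "\<dots> = (\<Sum>j<N. \<Sum>a\<in>LB k. \<Sum>b\<in>LB k. cnj (K a (x k)) * prodop m (P j) (x(k:=a)) (y(k:=b)) * K b (y k))"
        by (rule sum.swap)
      finally show ?thesis .
    qed
    also have "\<dots> = (\<Sum>j<N. prodop m (P' j) x y)"
    proof (rule sum.cong[OF refl])
      fix j
      have "(\<Sum>a\<in>LB k. \<Sum>b\<in>LB k. cnj (K a (x k)) * prodop m (P j) (x(k:=a)) (y(k:=b)) * K b (y k))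
          = mmult ?G (mmult ?G (adj (lift m k K)) (prodop m (P j))) (lift m k K) x y"
        by (rule CL[OF fin x y k, symmetric])
      also have "\<dots> = prodop m (P' j) x y"
        unfolding P'_def by (rule CL_prod[OF fin x y k])
      finally show "(\<Sum>a\<in>LB k. \<Sum>b\<in>LB k. cnj (K a (x k)) * prodop m (P j) (x(k:=a)) (y(k:=b)) * K b (y k))
          = prodop m (P' j) x y" .
    qed
    finally show "mmult ?G (mmult ?G (adj (lift m k K)) A) (lift m k K) x y = (\<Sum>j<N. prodop m (P' j) x y)" .
  qed
  ultimately show ?thesis unfolding separable_def by blast
qed

lemma sep_herm:
  assumes fin: "\<And>k. k < m \<Longrightarrow> finite (LB k)" and A: "separable m LB A"
  shows "herm (gbasis m LB) A"
proof -
  let ?G = "gbasis m LB"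
  obtain N :: nat and P where P: "\<forall>j<N. \<forall>k<m. psd (LB k) (P j k)"
      "op_eq ?G A (\<lambda>x y. \<Sum>j<N. prodop m (P j) x y)"
    using A unfolding separable_def by auto
  show ?thesis unfolding herm_def
  proof (intro ballI)
    fix x y assume x: "x \<in> ?G" and y: "y \<in> ?G"
    have "cnj (A y x) = (\<Sum>j<N. \<Prod>k<m. cnj (P j k (y k) (x k)))"
      using P(2) x y unfolding op_eq_def prodop_def by simp
    also have "\<dots> = (\<Sum>j<N. \<Prod>k<m. P j k (x k) (y k))"
      by (intro sum.cong prod.cong refl)
         (metis P(1) gbasis_in[OF x] gbasis_in[OF y] psd_herm complex_cnj_cnj lessThan_iff)
    also have "\<dots> = A x y" using P(2) x y unfolding op_eq_def prodop_def by simp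
    finally show "A x y = cnj (A y x)" by simp
  qed
qed

lemma upd_eq_iff:
  assumes x: "x \<in> gbasis m LB" and y: "y \<in> gbasis m LB" and k: "k < m"
  shows "(x(k:=a) = y(k:=b)) \<longleftrightarrow> a = b \<and> (\<forall>j<m. j \<noteq> k \<longrightarrow> x j = y j)"
proof
  assume "x(k:=a) = y(k:=b)"
  then have "a = b" and "\<forall>j. j \<noteq> k \<longrightarrow> x j = y j" by (metis fun_upd_same, metis fun_upd_other)
  then show "a = b \<and> (\<forall>j<m. j \<noteq> k \<longrightarrow> x j = y j)" by auto
next
  assume H: "a = b \<and> (\<forall>j<m. j \<noteq> k \<longrightarrow> x j = y j)"
  show "x(k:=a) = y(k:=b)"
  proof
    fix j show "(x(k:=a)) j = (y(k:=b)) j"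
      using H gbasis_out[OF x, of j] gbasis_out[OF y, of j] by (cases "j < m") auto
  qed
qed

lemma conj_idop:
  assumes fin: "\<And>k. k < m \<Longrightarrow> finite (LB k)" and x: "x \<in> gbasis m LB" and y: "y \<in> gbasis m LB" and k: "k < m"
  shows "(\<Sum>a\<in>LB k. \<Sum>b\<in>LB k. cnj (K a (x k)) * idop (x(k:=a)) (y(k:=b)) * K b (y k))
       = (if (\<forall>j<m. j \<noteq> k \<longrightarrow> x j = y j) then mmult (LB k) (adj K) K (x k) (y k) else 0)"
proof (cases "\<forall>j<m. j \<noteq> k \<longrightarrow> x j = y j")
  case True
  have "(\<Sum>a\<in>LB k. \<Sum>b\<in>LB k. cnj (K a (x k)) * idop (x(k:=a)) (y(k:=b)) * K b (y k))
      = (\<Sum>a\<in>LB k. \<Sum>b\<in>LB k. if b = a then cnj (K a (x k)) * K b (y k) else 0)"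
    by (intro sum.cong refl) (auto simp: idop_def upd_eq_iff[OF x y k] True)
  also have "\<dots> = (\<Sum>a\<in>LB k. cnj (K a (x k)) * K a (y k))"
    by (rule sum.cong[OF refl]) (simp add: fin[OF k])
  also have "\<dots> = mmult (LB k) (adj K) K (x k) (y k)"
    unfolding mmult_def adj_def ..
  finally show ?thesis using True by simp
next
  case False
  have "(\<Sum>a\<in>LB k. \<Sum>b\<in>LB k. cnj (K a (x k)) * idop (x(k:=a)) (y(k:=b)) * K b (y k)) = 0"
    by (intro sum.neutral ballI) (auto simp: idop_def upd_eq_iff[OF x y k] False)
  then show ?thesis using False by auto
qed

lemma idop_split:
  assumes x: "x \<in> gbasis m LB" and y: "y \<in> gbasis m LB" and k: "k < m"
  shows "idop x y = (if (\<forall>j<m. j \<noteq> k \<longrightarrow> x j = y j) then idop (x k) (y k) else 0)"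
proof -
  have "x = y \<longleftrightarrow> (\<forall>j<m. j \<noteq> k \<longrightarrow> x j = y j) \<and> x k = y k"
    using gbasis_eqI[OF x y] by auto
  then show ?thesis unfolding idop_def by auto
qed

lemma sum_if_const: "(\<Sum>j\<in>A. if C then f j else 0) = (if C then (\<Sum>j\<in>A. f j) else 0)"
  by (cases C) simp_all

lemma locc_sep_povm:
  assumes "locc m LB Out M" and fin: "\<And>k. k < m \<Longrightarrow> finite (LB k)" and finO: "finite Out"
  shows "(\<forall>i\<in>Out. separable m LB (M i)) \<and> op_eq (gbasis m LB) (\<lambda>x y. \<Sum>i\<in>Out. M i x y) idop"
  using assms(1)
proof (induction rule: locc.induct)
  case (stop c M)
  have "separable m LB (M i)" if i: "i \<in> Out" for i
  proof (cases "i = c")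
    case True
    have "op_eq (gbasis m LB) idop (M i)" using stop(2)[OF i] True unfolding op_eq_def by simp
    moreover have "separable m LB idop" by (rule sep_idop) (rule fin)
    ultimately show ?thesis using sep_cong by blast
  next
    case False
    have "op_eq (gbasis m LB) (\<lambda>x y. 0) (M i)" using stop(2)[OF i] False unfolding op_eq_def zeroop_def by simp
    then show ?thesis using sep_cong[OF sep_zero] by blast
  qed
  moreover have "op_eq (gbasis m LB) (\<lambda>x y. \<Sum>i\<in>Out. M i x y) idop"
    unfolding op_eq_def
  proof (intro ballI)
    fix x y assume x: "x \<in> gbasis m LB" and y: "y \<in> gbasis m LB"
    have "(\<Sum>i\<in>Out. M i x y) = (\<Sum>i\<in>Out. if i = c then idop x y else 0)"
      by (rule sum.cong[OF refl]) (use stop(2) x y in \<open>auto simp: op_eq_def zeroop_def\<close>)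
    also have "\<dots> = idop x y" using stop(1) finO by simp
    finally show "(\<Sum>i\<in>Out. M i x y) = idop x y" .
  qed
  ultimately show ?case by blast
next
  case (round k K r Ms M)
  let ?G = "gbasis m LB"
  have sepM: "separable m LB (M i)" if i: "i \<in> Out" for i
  proof -
    have "separable m LB (\<lambda>x y. \<Sum>j<r. mmult ?G (mmult ?G (adj (lift m k (K j))) (Ms j i)) (lift m k (K j)) x y)"
      by (rule sep_sum) (use round i in \<open>auto intro!: sep_kconj fin\<close>)
    then show ?thesis using sep_cong round(4)[OF i] unfolding op_eq_def by (metis (no_types, lifting))
  qed
  moreover have "op_eq ?G (\<lambda>x y. \<Sum>i\<in>Out. M i x y) idop"
    unfolding op_eq_def
  proof (intro ballI)
    fix x y assume x: "x \<in> ?G" and y: "y \<in> ?G"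
    have "(\<Sum>i\<in>Out. M i x y) = (\<Sum>i\<in>Out. \<Sum>j<r. mmult ?G (mmult ?G (adj (lift m k (K j))) (Ms j i)) (lift m k (K j)) x y)"
      by (rule sum.cong[OF refl]) (use round(4) x y in \<open>auto simp: op_eq_def\<close>)
    also have "\<dots> = (\<Sum>i\<in>Out. \<Sum>j<r. \<Sum>a\<in>LB k. \<Sum>b\<in>LB k. cnj (K j a (x k)) * Ms j i (x(k:=a)) (y(k:=b)) * K j b (y k))"
      by (simp only: CL[OF fin x y round(1)])
    also have "\<dots> = (\<Sum>j<r. \<Sum>a\<in>LB k. \<Sum>b\<in>LB k. cnj (K j a (x k)) * (\<Sum>i\<in>Out. Ms j i (x(k:=a)) (y(k:=b))) * K j b (y k))"
    proof -
      have "(\<Sum>i\<in>Out. \<Sum>j<r. \<Sum>a\<in>LB k. \<Sum>b\<in>LB k. cnj (K j a (x k)) * Ms j i (x(k:=a)) (y(k:=b)) * K j b (y k))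
         = (\<Sum>j<r. \<Sum>i\<in>Out. \<Sum>a\<in>LB k. \<Sum>b\<in>LB k. cnj (K j a (x k)) * Ms j i (x(k:=a)) (y(k:=b)) * K j b (y k))"
        by (rule sum.swap)
      also have "\<dots> = (\<Sum>j<r. \<Sum>a\<in>LB k. \<Sum>i\<in>Out. \<Sum>b\<in>LB k. cnj (K j a (x k)) * Ms j i (x(k:=a)) (y(k:=b)) * K j b (y k))"
        by (rule sum.cong[OF refl], rule sum.swap)
      also have "\<dots> = (\<Sum>j<r. \<Sum>a\<in>LB k. \<Sum>b\<in>LB k. \<Sum>i\<in>Out. cnj (K j a (x k)) * Ms j i (x(k:=a)) (y(k:=b)) * K j b (y k))"
        by (rule sum.cong[OF refl], rule sum.cong[OF refl], rule sum.swap)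
      also have "\<dots> = (\<Sum>j<r. \<Sum>a\<in>LB k. \<Sum>b\<in>LB k. cnj (K j a (x k)) * (\<Sum>i\<in>Out. Ms j i (x(k:=a)) (y(k:=b))) * K j b (y k))"
        by (simp add: sum_distrib_left sum_distrib_right)
      finally show ?thesis .
    qed
    also have "\<dots> = (\<Sum>j<r. \<Sum>a\<in>LB k. \<Sum>b\<in>LB k. cnj (K j a (x k)) * idop (x(k:=a)) (y(k:=b)) * K j b (y k))"
    proof (intro sum.cong refl)
      fix j a b assume j: "j \<in> {..<r}" and a: "a \<in> LB k" and b: "b \<in> LB k"
      have "op_eq ?G (\<lambda>x y. \<Sum>i\<in>Out. Ms j i x y) idop" using round.IH j by auto
      then show "cnj (K j a (x k)) * (\<Sum>i\<in>Out. Ms j i (x(k:=a)) (y(k:=b))) * K j b (y k)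
          = cnj (K j a (x k)) * idop (x(k:=a)) (y(k:=b)) * K j b (y k)"
        using gbasis_upd[OF x round(1) a] gbasis_upd[OF y round(1) b] unfolding op_eq_def by simp
    qed
    also have "\<dots> = (\<Sum>j<r. if (\<forall>j'<m. j' \<noteq> k \<longrightarrow> x j' = y j') then mmult (LB k) (adj (K j)) (K j) (x k) (y k) else 0)"
      by (rule sum.cong[OF refl]) (rule conj_idop[OF fin x y round(1)])
    also have "\<dots> = (if (\<forall>j'<m. j' \<noteq> k \<longrightarrow> x j' = y j') then (\<Sum>j<r. mmult (LB k) (adj (K j)) (K j) (x k) (y k)) else 0)"
      by (rule sum_if_const)
    also have "\<dots> = (if (\<forall>j'<m. j' \<noteq> k \<longrightarrow> x j' = y j') then idop (x k) (y k) else 0)"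
      using round(2) gbasis_in[OF x round(1)] gbasis_in[OF y round(1)] unfolding op_eq_def by auto
    also have "\<dots> = idop x y" by (rule idop_split[OF x y round(1), symmetric])
    finally show "(\<Sum>i\<in>Out. M i x y) = idop x y" .
  qed
  ultimately show ?case by blast
qed

lemma op_eq_trans: "op_eq S A B \<Longrightarrow> op_eq S B C \<Longrightarrow> op_eq S A C"
  unfolding op_eq_def by simp

lemma locc_cong:
  assumes "locc m LB Out M" "\<And>i. i \<in> Out \<Longrightarrow> op_eq (gbasis m LB) (M' i) (M i)"
  shows "locc m LB Out M'"
  using assms(1)
proof (cases rule: locc.cases)
  case (stop c)
  show ?thesis
    by (rule locc.stop[OF stop(1)]) (rule op_eq_trans[OF assms(2) stop(2)]; assumption)
next
  case (round k K r Ms)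
  show ?thesis
    apply (rule locc.round[where K=K and r=r and Ms=Ms])
       apply (rule round(1))
      apply (rule round(2))
     apply (erule round(3))
    apply (rule op_eq_trans[OF assms(2) round(4)]; assumption)
    done
qed

lemma sum_single_l:
  assumes "c \<in> S" "finite S"
  shows "(\<Sum>a\<in>S. (if a = c \<and> P then (1::complex) else 0) * F a) = (if P then F c else 0)"
proof -
  have "(\<Sum>a\<in>S. (if a = c \<and> P then (1::complex) else 0) * F a) = (\<Sum>a\<in>S. if a = c then (if P then F c else 0) else 0)"
    by (rule sum.cong) auto
  then show ?thesis using assms by simp
qed

lemma sum_single_r:
  assumes "c \<in> S" "finite S"
  shows "(\<Sum>a\<in>S. F a * (if a = c \<and> P then (1::complex) else 0)) = (if P then F c else 0)"
  using sum_single_l[OF assms, of P F] by (simp add: mult.commute)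

lemma cnj_if01: "cnj (if P then (1::complex) else 0) = (if P then 1 else 0)"
  by simp

lemma if_eq_swap: "(if a = z \<and> b = z then (1::'c::{zero,one}) else 0) = (if z = a then (if b = a then 1 else 0) else 0)" by auto

lemma conj_proj:
  assumes fin: "\<And>k. k < m \<Longrightarrow> finite (LB k)" and x: "x \<in> gbasis m LB" and y: "y \<in> gbasis m LB"
    and k: "k < m" and c: "c \<in> LB k"
  shows "mmult (gbasis m LB) (mmult (gbasis m LB) (adj (lift m k (\<lambda>a b. if a = c \<and> b = c then 1 else 0))) A)
            (lift m k (\<lambda>a b. if a = c \<and> b = c then 1 else 0)) x y
       = (if x k = c \<and> y k = c then A (x(k:=c)) (y(k:=c)) else 0)"
proof -
  let ?K = "(\<lambda>a b. if a = c \<and> b = c then (1::complex) else 0)"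
  have "mmult (gbasis m LB) (mmult (gbasis m LB) (adj (lift m k ?K)) A) (lift m k ?K) x y
     = (\<Sum>a\<in>LB k. \<Sum>b\<in>LB k. cnj (?K a (x k)) * A (x(k:=a)) (y(k:=b)) * ?K b (y k))"
    by (rule CL[OF fin x y k])
  also have "\<dots> = (\<Sum>a\<in>LB k. (if a = c \<and> x k = c then 1 else 0) * (\<Sum>b\<in>LB k. A (x(k:=a)) (y(k:=b)) * (if b = c \<and> y k = c then 1 else 0)))"
    by (simp add: sum_distrib_left mult.assoc cnj_if01)
  also have "\<dots> = (\<Sum>a\<in>LB k. (if a = c \<and> x k = c then 1 else 0) * (if y k = c then A (x(k:=a)) (y(k:=c)) else 0))"
    by (intro sum.cong refl arg_cong2[where f="(*)"] sum_single_r[OF c fin[OF k]])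
  also have "\<dots> = (if x k = c then (if y k = c then A (x(k:=c)) (y(k:=c)) else 0) else 0)"
    by (rule sum_single_l[OF c fin[OF k]])
  finally show ?thesis by simp
qed

lemma diag_locc_aux:
  assumes finA: "\<forall>k<m. finite (LB k)" and Out: "Out \<noteq> {}"
  shows "n \<le> m \<Longrightarrow> \<forall>g. (\<forall>x\<in>gbasis m LB. g x \<in> Out) \<longrightarrow>
     (\<forall>x\<in>gbasis m LB. \<forall>y\<in>gbasis m LB. (\<forall>j<n. x j = y j) \<longrightarrow> g x = g y) \<longrightarrow>
     locc m LB Out (\<lambda>i x y. if x = y \<and> g x = i then 1 else 0)"
proof (induction n)
  have fin: "\<And>k. k < m \<Longrightarrow> finite (LB k)" using finA by blast
  case 0
  show ?case
  proof (intro allI impI)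
    fix g :: "(nat \<Rightarrow> 'a) \<Rightarrow> 'b"
    assume gO: "\<forall>x\<in>gbasis m LB. g x \<in> Out"
      and gc: "\<forall>x\<in>gbasis m LB. \<forall>y\<in>gbasis m LB. (\<forall>j<0. x j = y j) \<longrightarrow> g x = g y"
    obtain c where c: "c \<in> Out" "\<forall>x\<in>gbasis m LB. g x = c"
    proof (cases "gbasis m LB = {}")
      case True
      obtain c0 where "c0 \<in> Out" using Out by blast
      then show ?thesis by (rule that) (simp add: True)
    next
      case False
      then obtain x0 where x0: "x0 \<in> gbasis m LB" by blast
      have "g x0 \<in> Out" using gO x0 by blast
      moreover have "\<forall>x\<in>gbasis m LB. g x = g x0"
      proof
        fix x assume x: "x \<in> gbasis m LB"
        have triv: "\<forall>j<(0::nat). x j = x0 j" by simp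
        show "g x = g x0" using gc x0 x triv by blast
      qed
      ultimately show ?thesis by (rule that)
    qed
    show "locc m LB Out (\<lambda>i x y. if x = y \<and> g x = i then 1 else 0)"
    proof (rule locc.stop[OF c(1)])
      fix i assume "i \<in> Out"
      show "op_eq (gbasis m LB) (\<lambda>x y. if x = y \<and> g x = i then 1 else 0) (if i = c then idop else zeroop)"
        using c(2) unfolding op_eq_def idop_def zeroop_def by auto
    qed
  qed
next
  case (Suc n)
  have fin: "\<And>k. k < m \<Longrightarrow> finite (LB k)" using finA by blast
  have nm: "n < m" using Suc.prems by simp
  let ?G = "gbasis m LB"
  define r where "r = card (LB n)"
  obtain e where e: "bij_betw e {0..<r} (LB n)"
    using ex_bij_betw_nat_finite[OF fin[OF nm]] unfolding r_def by blast
  have e': "bij_betw e {..<r} (LB n)" using e by (simp add: lessThan_atLeast0)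
  have e_in: "e j \<in> LB n" if "j < r" for j using e' that by (auto dest: bij_betw_apply)
  have reidx: "(\<Sum>j<r. h (e j)) = (\<Sum>z\<in>LB n. h z)" for h :: "'a \<Rightarrow> complex"
    by (rule sum.reindex_bij_betw[OF e'])
  show ?case
  proof (intro allI impI)
    fix g :: "(nat \<Rightarrow> 'a) \<Rightarrow> 'b"
    assume gO: "\<forall>x\<in>?G. g x \<in> Out"
      and gc: "\<forall>x\<in>?G. \<forall>y\<in>?G. (\<forall>j<Suc n. x j = y j) \<longrightarrow> g x = g y"
    define K where "K = (\<lambda>j a b. if a = e j \<and> b = e j then (1::complex) else 0)"
    define Ms where "Ms = (\<lambda>j i x y. if x = y \<and> (\<lambda>x. g (x(n := e j))) x = i then (1::complex) else 0)"
    show "locc m LB Out (\<lambda>i x y. if x = y \<and> g x = i then 1 else 0)"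
    proof (rule locc.round[where k=n and K=K and r=r and Ms=Ms])
      show "n < m" by (rule nm)
    next
      show "op_eq (LB n) (\<lambda>a b. \<Sum>j<r. mmult (LB n) (adj (K j)) (K j) a b) idop"
        unfolding op_eq_def
      proof (intro ballI)
        fix a b assume a: "a \<in> LB n" and b: "b \<in> LB n"
        have "mmult (LB n) (adj (K j)) (K j) a b = (if a = e j \<and> b = e j then 1 else 0)" if j: "j < r" for j
        proof -
          have "mmult (LB n) (adj (K j)) (K j) a b
              = (\<Sum>z\<in>LB n. (if z = e j \<and> a = e j then 1 else 0) * (if z = e j \<and> b = e j then 1 else 0))"
            unfolding mmult_def adj_def K_def by (simp add: cnj_if01)
          also have "\<dots> = (if a = e j then (if e j = e j \<and> b = e j then 1 else 0) else 0)"
            by (rule sum_single_l[OF e_in[OF j] fin[OF nm]])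
          finally show ?thesis by simp
        qed
        then have "(\<Sum>j<r. mmult (LB n) (adj (K j)) (K j) a b) = (\<Sum>j<r. (\<lambda>z. if a = z \<and> b = z then 1 else 0) (e j))"
          by (intro sum.cong refl) simp
        also have "\<dots> = (\<Sum>z\<in>LB n. if a = z \<and> b = z then 1 else 0)"
          by (rule reidx)
        also have "\<dots> = (\<Sum>z\<in>LB n. if z = a then (if b = a then 1 else 0) else 0)"
          by (intro sum.cong refl) (rule if_eq_swap)
        also have "\<dots> = idop a b" using a fin[OF nm] unfolding idop_def by auto
        finally show "(\<Sum>j<r. mmult (LB n) (adj (K j)) (K j) a b) = idop a b" .
      qed
    next
      fix j assume j: "j < r"
      have IH: "\<forall>g. (\<forall>x\<in>?G. g x \<in> Out) \<longrightarrow>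
          (\<forall>x\<in>?G. \<forall>y\<in>?G. (\<forall>j<n. x j = y j) \<longrightarrow> g x = g y) \<longrightarrow>
          locc m LB Out (\<lambda>i x y. if x = y \<and> g x = i then 1 else 0)"
        by (rule Suc.IH[OF less_imp_le[OF nm]])
      have 1: "\<forall>x\<in>?G. (\<lambda>x. g (x(n := e j))) x \<in> Out"
      proof
        fix x assume x: "x \<in> ?G"
        show "(\<lambda>x. g (x(n := e j))) x \<in> Out"
          using gO[rule_format, OF gbasis_upd[OF x nm e_in[OF j]]] by simp
      qed
      have 2: "\<forall>x\<in>?G. \<forall>y\<in>?G. (\<forall>j'<n. x j' = y j') \<longrightarrow> (\<lambda>x. g (x(n := e j))) x = (\<lambda>x. g (x(n := e j))) y"
      proof (intro ballI impI)
        fix x y assume x: "x \<in> ?G" and y: "y \<in> ?G" and xy: "\<forall>j'<n. x j' = y j'"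
        have ag: "\<forall>j'<Suc n. (x(n := e j)) j' = (y(n := e j)) j'"
        proof (intro allI impI)
          fix j' assume "j' < Suc n"
          then have "j' < n \<or> j' = n" by arith
          then show "(x(n := e j)) j' = (y(n := e j)) j'" using xy by auto
        qed
        show "(\<lambda>x. g (x(n := e j))) x = (\<lambda>x. g (x(n := e j))) y"
          by (rule gc[rule_format, OF gbasis_upd[OF x nm e_in[OF j]] gbasis_upd[OF y nm e_in[OF j]] ag[rule_format]])
      qed
      have "locc m LB Out (\<lambda>i x y. if x = y \<and> (\<lambda>x. g (x(n := e j))) x = i then 1 else 0)"
        by (rule IH[THEN spec[of _ "\<lambda>x. g (x(n := e j))"], THEN mp, THEN mp, OF 1 2])
      then show "locc m LB Out (Ms j)" unfolding Ms_def .
    next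
      fix i assume i: "i \<in> Out"
      show "op_eq ?G (\<lambda>x y. if x = y \<and> g x = i then 1 else 0)
         (\<lambda>x y. \<Sum>j<r. mmult ?G (mmult ?G (adj (lift m n (K j))) (Ms j i)) (lift m n (K j)) x y)"
        unfolding op_eq_def
      proof (intro ballI)
        fix x y assume x: "x \<in> ?G" and y: "y \<in> ?G"
        let ?h = "\<lambda>z. if x n = z \<and> y n = z \<and> x = y \<and> g x = i then (1::complex) else 0"
        have "mmult ?G (mmult ?G (adj (lift m n (K j))) (Ms j i)) (lift m n (K j)) x y = ?h (e j)" if j: "j < r" for j
        proof -
          have "mmult ?G (mmult ?G (adj (lift m n (K j))) (Ms j i)) (lift m n (K j)) x y
             = (if x n = e j \<and> y n = e j then Ms j i (x(n:=e j)) (y(n:=e j)) else 0)"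
            unfolding K_def by (rule conj_proj[OF fin x y nm e_in[OF j]])
          also have "\<dots> = ?h (e j)"
          proof (cases "x n = e j \<and> y n = e j")
            case True
            then have "x(n:=e j) = x" "y(n:=e j) = y" by auto
            then show ?thesis using True unfolding Ms_def by auto
          qed auto
          finally show ?thesis .
        qed
        then have "(\<Sum>j<r. mmult ?G (mmult ?G (adj (lift m n (K j))) (Ms j i)) (lift m n (K j)) x y)
            = (\<Sum>j<r. ?h (e j))" by (intro sum.cong refl) simp
        also have "\<dots> = (\<Sum>z\<in>LB n. ?h z)" by (rule reidx)
        also have "\<dots> = (\<Sum>z\<in>LB n. if z = x n then (if y n = x n \<and> x = y \<and> g x = i then 1 else 0) else 0)"
          by (rule sum.cong) auto
        also have "\<dots> = (if x = y \<and> g x = i then 1 else 0)"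
          using gbasis_in[OF x nm] fin[OF nm] by auto
        finally show "(if x = y \<and> g x = i then 1 else 0)
           = (\<Sum>j<r. mmult ?G (mmult ?G (adj (lift m n (K j))) (Ms j i)) (lift m n (K j)) x y)" by simp
      qed
    qed
  qed
qed

lemma diag_locc:
  assumes fin: "\<And>k. k < m \<Longrightarrow> finite (LB k)" and Out: "Out \<noteq> {}"
    and fO: "\<And>x. x \<in> gbasis m LB \<Longrightarrow> f x \<in> Out"
  shows "locc m LB Out (\<lambda>i x y. if x = y \<and> f x = i then 1 else 0)"
proof -
  have dep: "\<forall>x\<in>gbasis m LB. \<forall>y\<in>gbasis m LB. (\<forall>j<m. x j = y j) \<longrightarrow> f x = f y"
    using gbasis_eqI by metis
  have fO': "\<forall>x\<in>gbasis m LB. f x \<in> Out" using fO by blast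
  have finA: "\<forall>k<m. finite (LB k)" using fin by blast
  have H: "(\<forall>x\<in>gbasis m LB. f x \<in> Out) \<longrightarrow>
     (\<forall>x\<in>gbasis m LB. \<forall>y\<in>gbasis m LB. (\<forall>j<m. x j = y j) \<longrightarrow> f x = f y) \<longrightarrow>
     locc m LB Out (\<lambda>i x y. if x = y \<and> f x = i then 1 else 0)"
    using diag_locc_aux[OF finA Out order.refl] by (rule spec)
  show ?thesis by (rule H[THEN mp, THEN mp, OF fO' dep])
qed

lemma prod_sq_le:
  fixes c a b :: "nat \<Rightarrow> real"
  assumes "\<And>k. k \<in> I \<Longrightarrow> 0 \<le> c k" "\<And>k. k \<in> I \<Longrightarrow> (c k)^2 \<le> a k * b k"
  shows "(\<Prod>k\<in>I. c k)^2 \<le> (\<Prod>k\<in>I. a k) * (\<Prod>k\<in>I. b k)"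
proof -
  have "(\<Prod>k\<in>I. c k)^2 = (\<Prod>k\<in>I. (c k)^2)" by (simp add: prod_power_distrib)
  also have "\<dots> \<le> (\<Prod>k\<in>I. a k * b k)"
    by (rule prod_mono) (use assms in auto)
  also have "\<dots> = (\<Prod>k\<in>I. a k) * (\<Prod>k\<in>I. b k)" by (rule prod.distrib)
  finally show ?thesis .
qed

lemma sqrt_amgm_le:
  fixes c a b :: real
  assumes "0 \<le> c" "0 \<le> a" "0 \<le> b" "c^2 \<le> a * b"
  shows "c \<le> (a + b) / 2"
proof -
  have e: "((a + b) / 2)^2 - a * b = ((a - b) / 2)^2" by (simp add: power2_eq_square field_simps)
  have "0 \<le> ((a - b) / 2)^2" by simp
  then have "a * b \<le> ((a + b) / 2)^2" using e by linarith
  then have "c^2 \<le> ((a + b) / 2)^2" using assms(4) by linarith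
  moreover have "0 \<le> (a + b) / 2" using assms by simp
  ultimately show ?thesis by (rule power2_le_imp_le)
qed

lemma cmod_prodop_bound:
  assumes fin: "\<And>k. k < m \<Longrightarrow> finite (LB k)" and m1: "1 < m"
    and psdP: "\<And>k. k < m \<Longrightarrow> psd (LB k) (P k)"
    and X: "X \<in> gbasis m LB" and Y: "Y \<in> gbasis m LB"
  shows "cmod (prodop m P Y X) \<le> ((\<Prod>k<m. Re (P k ((X(1:=Y 1)) k) ((X(1:=Y 1)) k)))
                                  + (\<Prod>k<m. Re (P k ((Y(1:=X 1)) k) ((Y(1:=X 1)) k)))) / 2"
proof -
  let ?p = "\<lambda>k a. Re (P k a a)"
  let ?c = "\<lambda>k. cmod (P k (Y k) (X k))"
  have cm: "cmod (prodop m P Y X) = (\<Prod>k<m. ?c k)"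
    unfolding prodop_def by (simp add: prod_norm)
  have pnn: "0 \<le> ?p k a" if "k < m" "a \<in> LB k" for k a
    using psd_diag_nonneg[OF psdP[OF that(1)] fin[OF that(1)] that(2)] .
  have sq: "(\<Prod>k<m. ?c k)^2 \<le> (\<Prod>k<m. ?p k ((X(1:=Y 1)) k)) * (\<Prod>k<m. ?p k ((Y(1:=X 1)) k))"
  proof (rule prod_sq_le)
    fix k assume k: "k \<in> {..<m}"
    then have k': "k < m" by simp
    show "0 \<le> ?c k" by simp
    have cs: "(?c k)^2 \<le> ?p k (Y k) * ?p k (X k)"
      by (rule psd_cs[OF psdP[OF k'] fin[OF k'] gbasis_in[OF Y k'] gbasis_in[OF X k']])
    show "(?c k)^2 \<le> ?p k ((X(1:=Y 1)) k) * ?p k ((Y(1:=X 1)) k)"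
    proof (cases "k = 1")
      case True then show ?thesis using cs by simp
    next
      case False then show ?thesis using cs by (simp add: mult.commute)
    qed
  qed
  have a0: "0 \<le> (\<Prod>k<m. ?p k ((X(1:=Y 1)) k))"
    by (rule prod_nonneg) (metis lessThan_iff pnn gbasis_in[OF gbasis_upd[OF X m1 gbasis_in[OF Y m1]]])
  have b0: "0 \<le> (\<Prod>k<m. ?p k ((Y(1:=X 1)) k))"
    by (rule prod_nonneg) (metis lessThan_iff pnn gbasis_in[OF gbasis_upd[OF Y m1 gbasis_in[OF X m1]]])
  have c0: "0 \<le> (\<Prod>k<m. ?c k)" by (simp add: prod_nonneg)
  have "(\<Prod>k<m. ?c k) \<le> ((\<Prod>k<m. ?p k ((X(1:=Y 1)) k)) + (\<Prod>k<m. ?p k ((Y(1:=X 1)) k))) / 2"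
    by (rule sqrt_amgm_le[OF c0 a0 b0 sq])
  then show ?thesis unfolding cm .
qed

lemma Re_tr_prodop:
  assumes fin: "\<And>k. k < m \<Longrightarrow> finite (LB k)" and psdP: "\<And>k. k < m \<Longrightarrow> psd (LB k) (P k)"
  shows "Re (tr (gbasis m LB) (prodop m P)) = (\<Sum>Z\<in>gbasis m LB. \<Prod>k<m. Re (P k (Z k) (Z k)))"
proof -
  have "tr (gbasis m LB) (prodop m P) = (\<Sum>Z\<in>gbasis m LB. complex_of_real (\<Prod>k<m. Re (P k (Z k) (Z k))))"
    unfolding tr_def prodop_def
  proof (rule sum.cong[OF refl])
    fix Z assume Z: "Z \<in> gbasis m LB"
    have "(\<Prod>k<m. P k (Z k) (Z k)) = (\<Prod>k<m. complex_of_real (Re (P k (Z k) (Z k))))"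
      by (rule prod.cong[OF refl]) (metis lessThan_iff psd_diag_real psdP gbasis_in[OF Z])
    then show "(\<Prod>k<m. P k (Z k) (Z k)) = complex_of_real (\<Prod>k<m. Re (P k (Z k) (Z k)))" by simp
  qed
  then show ?thesis by (simp only: Re_sum Re_complex_of_real)
qed

lemma sum_half_lemma:
  fixes f g :: "'a \<Rightarrow> real"
  shows "(\<Sum>x\<in>S. h * ((f x + g x) / 2)) = h / 2 * ((\<Sum>x\<in>S. f x) + (\<Sum>x\<in>S. g x))"
proof -
  have "(\<Sum>x\<in>S. h * ((f x + g x) / 2)) = (\<Sum>x\<in>S. h / 2 * f x + h / 2 * g x)"
    by (rule sum.cong) (simp_all add: field_simps)
  also have "\<dots> = h / 2 * (\<Sum>x\<in>S. f x) + h / 2 * (\<Sum>x\<in>S. g x)"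
    by (simp add: sum.distrib sum_distrib_left)
  finally show ?thesis by (simp add: distrib_left)
qed

lemma bound_prod:
  assumes fin: "\<And>k. k < m \<Longrightarrow> finite (LB k)" and m1: "1 < m"
    and psdP: "\<And>k. k < m \<Longrightarrow> psd (LB k) (P k)"
    and T: "\<And>X Y. X \<in> gbasis m LB \<Longrightarrow> Y \<in> gbasis m LB \<Longrightarrow> T X Y = complex_of_real (t X Y) \<and> 0 \<le> t X Y \<and> t X Y \<le> h"
    and h0: "0 \<le> h"
    and supp: "\<And>X Y. X \<in> gbasis m LB \<Longrightarrow> Y \<in> gbasis m LB \<Longrightarrow> T X Y \<noteq> 0 \<Longrightarrow> (X, Y) \<in> S"
    and SG: "S \<subseteq> gbasis m LB \<times> gbasis m LB"
    and inj1: "inj_on (\<lambda>(X, Y). X(1 := Y 1)) S"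
    and inj2: "inj_on (\<lambda>(X, Y). Y(1 := X 1)) S"
  shows "Re (tr (gbasis m LB) (mmult (gbasis m LB) T (prodop m P))) \<le> h * Re (tr (gbasis m LB) (prodop m P))"
proof -
  let ?G = "gbasis m LB"
  let ?q = "\<lambda>Z. \<Prod>k<m. Re (P k (Z k) (Z k))"
  let ?al = "\<lambda>(X, Y). ?q (X(1 := Y 1))"
  let ?be = "\<lambda>(X, Y). ?q (Y(1 := X 1))"
  have finG: "finite ?G" by (rule finite_gbasis[OF fin])
  have finS: "finite S" using finite_subset[OF SG] finG by blast
  have qnn: "0 \<le> ?q Z" if "Z \<in> ?G" for Z
    by (rule prod_nonneg) (metis lessThan_iff psd_diag_nonneg psdP fin gbasis_in[OF that])
  have R: "Re (tr ?G (prodop m P)) = (\<Sum>Z\<in>?G. ?q Z)" by (rule Re_tr_prodop[OF fin psdP])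
  have trm: "Re (T X Y * prodop m P Y X) \<le> (if (X, Y) \<in> S then h * ((?al (X, Y) + ?be (X, Y)) / 2) else 0)"
    if X: "X \<in> ?G" and Y: "Y \<in> ?G" for X Y
  proof (cases "(X, Y) \<in> S")
    case True
    have "Re (T X Y * prodop m P Y X) \<le> cmod (T X Y * prodop m P Y X)" by (rule complex_Re_le_cmod)
    also have "\<dots> = t X Y * cmod (prodop m P Y X)" using T[OF X Y] by (simp add: norm_mult)
    also have "\<dots> \<le> h * cmod (prodop m P Y X)" using T[OF X Y] by (simp add: mult_right_mono)
    also have "\<dots> \<le> h * ((?al (X, Y) + ?be (X, Y)) / 2)"
      using mult_left_mono[OF cmod_prodop_bound[OF fin m1 psdP X Y] h0] by simp
    finally show ?thesis using True by simp
  next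
    case False
    then have "T X Y = 0" using supp[OF X Y] by blast
    then show ?thesis using False by simp
  qed
  have "Re (tr ?G (mmult ?G T (prodop m P))) = (\<Sum>X\<in>?G. \<Sum>Y\<in>?G. Re (T X Y * prodop m P Y X))"
    unfolding tr_def mmult_def by (simp only: Re_sum)
  also have "\<dots> \<le> (\<Sum>X\<in>?G. \<Sum>Y\<in>?G. (if (X, Y) \<in> S then h * ((?al (X, Y) + ?be (X, Y)) / 2) else 0))"
    by (intro sum_mono trm)
  also have "\<dots> = (\<Sum>XY\<in>?G \<times> ?G. (if XY \<in> S then h * ((?al XY + ?be XY) / 2) else 0))"
    by (subst sum.cartesian_product) (rule sum.cong[OF refl], clarsimp)
  also have "\<dots> = (\<Sum>XY\<in>(?G \<times> ?G) \<inter> S. h * ((?al XY + ?be XY) / 2))"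
    by (rule sum.inter_restrict[symmetric]) (simp add: finG)
  also have "(?G \<times> ?G) \<inter> S = S" using SG by blast
  also have "(\<Sum>XY\<in>S. h * ((?al XY + ?be XY) / 2)) = h / 2 * ((\<Sum>XY\<in>S. ?al XY) + (\<Sum>XY\<in>S. ?be XY))"
    by (rule sum_half_lemma)
  also have "\<dots> \<le> h / 2 * ((\<Sum>Z\<in>?G. ?q Z) + (\<Sum>Z\<in>?G. ?q Z))"
  proof (rule mult_left_mono)
    show "0 \<le> h / 2" using h0 by simp
    have img1: "(\<lambda>(X, Y). X(1 := Y 1)) ` S \<subseteq> ?G"
    proof
      fix Z assume "Z \<in> (\<lambda>(X, Y). X(1 := Y 1)) ` S"
      then obtain X Y where XYS: "(X, Y) \<in> S" and Z: "Z = X(1 := Y 1)" by auto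
      have XY: "X \<in> ?G" "Y \<in> ?G" using XYS SG by auto
      show "Z \<in> ?G" unfolding Z by (rule gbasis_upd[OF XY(1) m1 gbasis_in[OF XY(2) m1]])
    qed
    have img2: "(\<lambda>(X, Y). Y(1 := X 1)) ` S \<subseteq> ?G"
    proof
      fix Z assume "Z \<in> (\<lambda>(X, Y). Y(1 := X 1)) ` S"
      then obtain X Y where XYS: "(X, Y) \<in> S" and Z: "Z = Y(1 := X 1)" by auto
      have XY: "X \<in> ?G" "Y \<in> ?G" using XYS SG by auto
      show "Z \<in> ?G" unfolding Z by (rule gbasis_upd[OF XY(2) m1 gbasis_in[OF XY(1) m1]])
    qed
    have "(\<Sum>XY\<in>S. ?al XY) = (\<Sum>Z\<in>(\<lambda>(X, Y). X(1 := Y 1)) ` S. ?q Z)"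
      using sum.reindex[OF inj1, of ?q] by (simp add: comp_def case_prod_beta)
    also have "\<dots> \<le> (\<Sum>Z\<in>?G. ?q Z)"
      by (rule sum_mono2[OF finG img1]) (use qnn in blast)
    finally have 1: "(\<Sum>XY\<in>S. ?al XY) \<le> (\<Sum>Z\<in>?G. ?q Z)" .
    have "(\<Sum>XY\<in>S. ?be XY) = (\<Sum>Z\<in>(\<lambda>(X, Y). Y(1 := X 1)) ` S. ?q Z)"
      using sum.reindex[OF inj2, of ?q] by (simp add: comp_def case_prod_beta)
    also have "\<dots> \<le> (\<Sum>Z\<in>?G. ?q Z)"
      by (rule sum_mono2[OF finG img2]) (use qnn in blast)
    finally have 2: "(\<Sum>XY\<in>S. ?be XY) \<le> (\<Sum>Z\<in>?G. ?q Z)" .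
    show "(\<Sum>XY\<in>S. ?al XY) + (\<Sum>XY\<in>S. ?be XY) \<le> (\<Sum>Z\<in>?G. ?q Z) + (\<Sum>Z\<in>?G. ?q Z)"
      using 1 2 by linarith
  qed
  also have "\<dots> = h * Re (tr ?G (prodop m P))" unfolding R by simp
  finally show ?thesis .
qed

lemma bound_sep:
  assumes fin: "\<And>k. k < m \<Longrightarrow> finite (LB k)" and m1: "1 < m"
    and A: "separable m LB A"
    and T: "\<And>X Y. X \<in> gbasis m LB \<Longrightarrow> Y \<in> gbasis m LB \<Longrightarrow>
              T X Y = complex_of_real (Re (T X Y)) \<and> 0 \<le> Re (T X Y) \<and> Re (T X Y) \<le> h"
    and h0: "0 \<le> h"
    and inj1: "inj_on (\<lambda>(X, Y). X(1 := Y 1)) {(X, Y). X \<in> gbasis m LB \<and> Y \<in> gbasis m LB \<and> T X Y \<noteq> 0}"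
    and inj2: "inj_on (\<lambda>(X, Y). Y(1 := X 1)) {(X, Y). X \<in> gbasis m LB \<and> Y \<in> gbasis m LB \<and> T X Y \<noteq> 0}"
  shows "Re (tr (gbasis m LB) (mmult (gbasis m LB) T A)) \<le> h * Re (tr (gbasis m LB) A)"
proof -
  let ?G = "gbasis m LB"
  obtain N :: nat and P where P: "\<forall>j<N. \<forall>k<m. psd (LB k) (P j k)"
      "op_eq ?G A (\<lambda>x y. \<Sum>j<N. prodop m (P j) x y)"
    using A unfolding separable_def by auto
  have trA: "tr ?G A = (\<Sum>j<N. tr ?G (prodop m (P j)))"
    unfolding tr_def using P(2) unfolding op_eq_def by (simp add: sum.swap[of _ ?G])
  have trTA: "tr ?G (mmult ?G T A) = (\<Sum>j<N. tr ?G (mmult ?G T (prodop m (P j))))"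
  proof -
    have "tr ?G (mmult ?G T A) = (\<Sum>X\<in>?G. \<Sum>Y\<in>?G. T X Y * (\<Sum>j<N. prodop m (P j) Y X))"
      unfolding tr_def mmult_def using P(2) unfolding op_eq_def by simp
    also have "\<dots> = (\<Sum>X\<in>?G. \<Sum>Y\<in>?G. \<Sum>j<N. T X Y * prodop m (P j) Y X)"
      by (simp add: sum_distrib_left)
    also have "\<dots> = (\<Sum>X\<in>?G. \<Sum>j<N. \<Sum>Y\<in>?G. T X Y * prodop m (P j) Y X)"
      by (rule sum.cong[OF refl], rule sum.swap)
    also have "\<dots> = (\<Sum>j<N. \<Sum>X\<in>?G. \<Sum>Y\<in>?G. T X Y * prodop m (P j) Y X)"
      by (rule sum.swap)
    also have "\<dots> = (\<Sum>j<N. tr ?G (mmult ?G T (prodop m (P j))))"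
      unfolding tr_def mmult_def ..
    finally show ?thesis .
  qed
  have each: "Re (tr ?G (mmult ?G T (prodop m (P j)))) \<le> h * Re (tr ?G (prodop m (P j)))" if j: "j < N" for j
  proof (rule bound_prod[OF fin m1, where t="\<lambda>X Y. Re (T X Y)" and S="{(X, Y). X \<in> gbasis m LB \<and> Y \<in> gbasis m LB \<and> T X Y \<noteq> 0}"])
    show "\<And>k. k < m \<Longrightarrow> psd (LB k) (P j k)" using P(1) j by blast
    show "\<And>X Y. X \<in> ?G \<Longrightarrow> Y \<in> ?G \<Longrightarrow> T X Y = complex_of_real (Re (T X Y)) \<and> 0 \<le> Re (T X Y) \<and> Re (T X Y) \<le> h"
      by (rule T)
    show "0 \<le> h" by (rule h0)
    show "\<And>X Y. X \<in> ?G \<Longrightarrow> Y \<in> ?G \<Longrightarrow> T X Y \<noteq> 0 \<Longrightarrow> (X, Y) \<in> {(X, Y). X \<in> ?G \<and> Y \<in> ?G \<and> T X Y \<noteq> 0}"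
      by blast
    show "{(X, Y). X \<in> ?G \<and> Y \<in> ?G \<and> T X Y \<noteq> 0} \<subseteq> ?G \<times> ?G" by blast
  qed (simp, rule inj1, rule inj2)
  have "Re (tr ?G (mmult ?G T A)) = (\<Sum>j<N. Re (tr ?G (mmult ?G T (prodop m (P j)))))"
    unfolding trTA by (simp only: Re_sum)
  also have "\<dots> \<le> (\<Sum>j<N. h * Re (tr ?G (prodop m (P j))))"
    by (rule sum_mono) (use each in simp)
  also have "\<dots> = h * Re (tr ?G A)"
    unfolding trA by (simp add: sum_distrib_left Re_sum)
  finally show ?thesis .
qed

lemma tr_herm_real:
  assumes "herm S E" "herm S B"
  shows "Im (tr S (mmult S E B)) = 0"
proof -
  have "cnj (tr S (mmult S E B)) = (\<Sum>x\<in>S. \<Sum>y\<in>S. cnj (E x y) * cnj (B y x))"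
    unfolding tr_def mmult_def by simp
  also have "\<dots> = (\<Sum>x\<in>S. \<Sum>y\<in>S. E y x * B x y)"
    using assms unfolding herm_def by (intro sum.cong refl) (metis complex_cnj_cnj)
  also have "\<dots> = (\<Sum>y\<in>S. \<Sum>x\<in>S. E y x * B x y)"
    by (rule sum.swap)
  also have "\<dots> = tr S (mmult S E B)"
    unfolding tr_def mmult_def ..
  finally have "cnj (tr S (mmult S E B)) = tr S (mmult S E B)" .
  then show ?thesis by (metis Reals_cnj_iff complex_is_Real_iff)
qed

lemma tr_mmult_shift:
  assumes fin: "finite S"
  shows "tr S (mmult S (\<lambda>x y. c * idop x y - T x y) B) = c * tr S B - tr S (mmult S T B)"
proof -
  have "tr S (mmult S (\<lambda>x y. c * idop x y - T x y) B) = (\<Sum>x\<in>S. \<Sum>y\<in>S. c * idop x y * B y x - T x y * B y x)"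
    unfolding tr_def mmult_def by (simp add: algebra_simps)
  also have "\<dots> = (\<Sum>x\<in>S. c * B x x - (\<Sum>y\<in>S. T x y * B y x))"
  proof (rule sum.cong[OF refl])
    fix x assume x: "x \<in> S"
    have "(\<Sum>y\<in>S. c * idop x y * B y x) = (\<Sum>y\<in>S. if y = x then c * B x x else 0)"
      by (rule sum.cong) (auto simp: idop_def)
    also have "\<dots> = c * B x x" using x fin by simp
    finally have "(\<Sum>y\<in>S. c * idop x y * B y x) = c * B x x" .
    then show "(\<Sum>y\<in>S. c * idop x y * B y x - T x y * B y x) = c * B x x - (\<Sum>y\<in>S. T x y * B y x)"
      by (simp add: sum_subtractf)
  qed
  also have "\<dots> = c * tr S B - tr S (mmult S T B)"
    unfolding tr_def mmult_def by (simp add: sum_subtractf sum_distrib_left)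
  finally show ?thesis .
qed

lemma sep_dual_gen:
  assumes fin: "\<And>k. k < m \<Longrightarrow> finite (LB k)" and m1: "1 < m"
    and T: "\<And>X Y. X \<in> gbasis m LB \<Longrightarrow> Y \<in> gbasis m LB \<Longrightarrow>
              T X Y = complex_of_real (Re (T X Y)) \<and> 0 \<le> Re (T X Y) \<and> Re (T X Y) \<le> h"
    and h0: "0 \<le> h"
    and inj1: "inj_on (\<lambda>(X, Y). X(1 := Y 1)) {(X, Y). X \<in> gbasis m LB \<and> Y \<in> gbasis m LB \<and> T X Y \<noteq> 0}"
    and inj2: "inj_on (\<lambda>(X, Y). Y(1 := X 1)) {(X, Y). X \<in> gbasis m LB \<and> Y \<in> gbasis m LB \<and> T X Y \<noteq> 0}"
    and hT: "herm (gbasis m LB) T"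
  shows "sep_dual m LB (\<lambda>X Y. complex_of_real h * idop X Y - T X Y)"
  unfolding sep_dual_def
proof (intro conjI allI impI)
  let ?G = "gbasis m LB"
  let ?E = "\<lambda>X Y. complex_of_real h * idop X Y - T X Y"
  show hE: "herm ?G ?E"
    unfolding herm_def
  proof (intro ballI)
    fix x y assume x: "x \<in> ?G" and y: "y \<in> ?G"
    have 1: "T x y = cnj (T y x)" using hT x y unfolding herm_def by blast
    have 2: "idop x y = idop y x" "cnj (idop y x) = idop y x" by (simp_all add: idop_def)
    show "complex_of_real h * idop x y - T x y = cnj (complex_of_real h * idop y x - T y x)"
      by (simp only: 1 2 complex_cnj_diff complex_cnj_mult complex_cnj_complex_of_real complex_cnj_cnj)
  qed
  fix \<sigma> assume st: "sep_state m LB \<sigma>"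
  then have sepS: "separable m LB \<sigma>" unfolding sep_state_def by blast
  have hS: "herm ?G \<sigma>" by (rule sep_herm[OF fin sepS])
  show "Im (tr ?G (mmult ?G ?E \<sigma>)) = 0" by (rule tr_herm_real[OF hE hS])
  have eq: "tr ?G (mmult ?G ?E \<sigma>) = complex_of_real h * tr ?G \<sigma> - tr ?G (mmult ?G T \<sigma>)"
    by (rule tr_mmult_shift[OF finite_gbasis[OF fin]])
  have "Re (tr ?G (mmult ?G T \<sigma>)) \<le> h * Re (tr ?G \<sigma>)"
    by (rule bound_sep[OF fin m1 sepS T h0 inj1 inj2]) simp_all
  then show "0 \<le> Re (tr ?G (mmult ?G ?E \<sigma>))" unfolding eq by simp
qed

lemma tr_scale: "tr S (mmult S (\<lambda>x y. complex_of_real a * R x y) M) = complex_of_real a * tr S (mmult S R M)"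
  unfolding tr_def mmult_def by (simp add: sum_distrib_left mult.assoc)

lemma tr_sum_out:
  "tr S (\<lambda>x y. \<Sum>i\<in>Out. M i x y) = (\<Sum>i\<in>Out. tr S (M i))"
  unfolding tr_def by (rule sum.swap)

lemma tr_idop: "tr S idop = of_nat (card S)"
  unfolding tr_def idop_def by simp

lemma succ_upper:
  assumes fin: "\<And>k. k < m \<Longrightarrow> finite (LB k)" and m1: "1 < m" and finO: "finite Out"
    and sepM: "\<And>i. i \<in> Out \<Longrightarrow> separable m LB (M i)"
    and sumM: "op_eq (gbasis m LB) (\<lambda>x y. \<Sum>i\<in>Out. M i x y) idop"
    and T: "\<And>i X Y. i \<in> Out \<Longrightarrow> X \<in> gbasis m LB \<Longrightarrow> Y \<in> gbasis m LB \<Longrightarrow>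
              complex_of_real (\<eta> i) * \<rho> i X Y = complex_of_real (Re (complex_of_real (\<eta> i) * \<rho> i X Y))
              \<and> 0 \<le> Re (complex_of_real (\<eta> i) * \<rho> i X Y) \<and> Re (complex_of_real (\<eta> i) * \<rho> i X Y) \<le> h"
    and h0: "0 \<le> h"
    and inj1: "\<And>i. i \<in> Out \<Longrightarrow> inj_on (\<lambda>(X, Y). X(1 := Y 1)) {(X, Y). X \<in> gbasis m LB \<and> Y \<in> gbasis m LB \<and> complex_of_real (\<eta> i) * \<rho> i X Y \<noteq> 0}"
    and inj2: "\<And>i. i \<in> Out \<Longrightarrow> inj_on (\<lambda>(X, Y). Y(1 := X 1)) {(X, Y). X \<in> gbasis m LB \<and> Y \<in> gbasis m LB \<and> complex_of_real (\<eta> i) * \<rho> i X Y \<noteq> 0}"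
  shows "succ_prob (gbasis m LB) Out \<eta> \<rho> M \<le> h * real (card (gbasis m LB))"
proof -
  let ?G = "gbasis m LB"
  have "succ_prob ?G Out \<eta> \<rho> M = (\<Sum>i\<in>Out. Re (tr ?G (mmult ?G (\<lambda>x y. complex_of_real (\<eta> i) * \<rho> i x y) (M i))))"
    unfolding succ_prob_def tr_scale by simp
  also have "\<dots> \<le> (\<Sum>i\<in>Out. h * Re (tr ?G (M i)))"
  proof (rule sum_mono)
    fix i assume i: "i \<in> Out"
    show "Re (tr ?G (mmult ?G (\<lambda>x y. complex_of_real (\<eta> i) * \<rho> i x y) (M i))) \<le> h * Re (tr ?G (M i))"
      by (rule bound_sep[OF fin m1 sepM[OF i] _ h0 inj1[OF i] inj2[OF i]]) (use T[OF i] in simp_all)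
  qed
  also have "\<dots> = h * Re (tr ?G (\<lambda>x y. \<Sum>i\<in>Out. M i x y))"
    unfolding tr_sum_out by (simp add: sum_distrib_left Re_sum)
  also have "tr ?G (\<lambda>x y. \<Sum>i\<in>Out. M i x y) = tr ?G idop"
    unfolding tr_def using sumM unfolding op_eq_def by simp
  also have "\<dots> = of_nat (card ?G)" by (rule tr_idop)
  finally show ?thesis by simp
qed

lemma psd_D:
  assumes "finite S"
  shows "psd S (\<lambda>x y. if x = y \<and> f x = i then (1::complex) else 0)"
  unfolding psd_def
proof (intro conjI allI)
  show "herm S (\<lambda>x y. if x = y \<and> f x = i then (1::complex) else 0)" unfolding herm_def by auto
next
  fix v :: "'a \<Rightarrow> complex"
  have "(\<Sum>x\<in>S. \<Sum>y\<in>S. cnj (v x) * (if x = y \<and> f x = i then 1 else 0) * v y)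
      = (\<Sum>x\<in>S. if f x = i then complex_of_real ((cmod (v x))^2) else 0)"
  proof (rule sum.cong[OF refl])
    fix x assume x: "x \<in> S"
    have "(\<Sum>y\<in>S. cnj (v x) * (if x = y \<and> f x = i then 1 else 0) * v y)
        = (\<Sum>y\<in>S. if y = x then (if f x = i then cnj (v x) * v x else 0) else 0)"
      by (rule sum.cong) auto
    also have "\<dots> = (if f x = i then cnj (v x) * v x else 0)" using x assms by simp
    also have "\<dots> = (if f x = i then complex_of_real ((cmod (v x))^2) else 0)"
      using complex_norm_square[of "v x"] by (simp add: mult.commute)
    finally show "(\<Sum>y\<in>S. cnj (v x) * (if x = y \<and> f x = i then 1 else 0) * v y)
        = (if f x = i then complex_of_real ((cmod (v x))^2) else 0)" .
  qed
  moreover have "0 \<le> Re (\<Sum>x\<in>S. if f x = i then complex_of_real ((cmod (v x))^2) else 0)"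
    by (simp add: Re_sum sum_nonneg if_distrib cong: if_cong)
  ultimately show "0 \<le> Re (\<Sum>x\<in>S. \<Sum>y\<in>S. cnj (v x) * (if x = y \<and> f x = i then 1 else 0) * v y)"
    by simp
qed

lemma succ_D:
  assumes finG: "finite (gbasis m LB)" and finO: "finite Out"
    and fO: "\<And>x. x \<in> gbasis m LB \<Longrightarrow> f x \<in> Out"
    and diag: "\<And>i x. i \<in> Out \<Longrightarrow> x \<in> gbasis m LB \<Longrightarrow> f x = i \<Longrightarrow> complex_of_real (\<eta> i) * \<rho> i x x = complex_of_real h"
  shows "succ_prob (gbasis m LB) Out \<eta> \<rho> (\<lambda>i x y. if x = y \<and> f x = i then (1::complex) else 0) = h * real (card (gbasis m LB))"
proof -
  let ?G = "gbasis m LB"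
  have each: "\<eta> i * Re (tr ?G (mmult ?G (\<rho> i) (\<lambda>x y. if x = y \<and> f x = i then (1::complex) else 0)))
      = (\<Sum>x\<in>?G. if f x = i then h else 0)" if i: "i \<in> Out" for i
  proof -
    have "tr ?G (mmult ?G (\<rho> i) (\<lambda>x y. if x = y \<and> f x = i then (1::complex) else 0))
        = (\<Sum>x\<in>?G. if f x = i then \<rho> i x x else 0)"
      unfolding tr_def mmult_def
    proof (rule sum.cong[OF refl])
      fix x assume x: "x \<in> ?G"
      have "(\<Sum>y\<in>?G. \<rho> i x y * (if y = x \<and> f y = i then 1 else 0)) = (\<Sum>y\<in>?G. if y = x then (if f x = i then \<rho> i x x else 0) else 0)"
        by (rule sum.cong) auto
      also have "\<dots> = (if f x = i then \<rho> i x x else 0)" using x finG by simp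
      finally show "(\<Sum>y\<in>?G. \<rho> i x y * (if y = x \<and> f y = i then 1 else 0)) = (if f x = i then \<rho> i x x else 0)" .
    qed
    then have "complex_of_real (\<eta> i) * tr ?G (mmult ?G (\<rho> i) (\<lambda>x y. if x = y \<and> f x = i then (1::complex) else 0))
        = (\<Sum>x\<in>?G. if f x = i then complex_of_real (\<eta> i) * \<rho> i x x else 0)"
      by (simp add: sum_distrib_left if_distrib cong: if_cong)
    also have "\<dots> = (\<Sum>x\<in>?G. if f x = i then complex_of_real h else 0)"
      by (rule sum.cong[OF refl]) (simp add: diag[OF i])
    also have "\<dots> = complex_of_real (\<Sum>x\<in>?G. if f x = i then h else 0)"
      by (simp add: if_distrib cong: if_cong)
    finally have "Re (complex_of_real (\<eta> i) * tr ?G (mmult ?G (\<rho> i) (\<lambda>x y. if x = y \<and> f x = i then (1::complex) else 0)))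
        = (\<Sum>x\<in>?G. if f x = i then h else 0)" by simp
    then show ?thesis by simp
  qed
  have "succ_prob ?G Out \<eta> \<rho> (\<lambda>i x y. if x = y \<and> f x = i then (1::complex) else 0)
      = (\<Sum>i\<in>Out. \<Sum>x\<in>?G. if f x = i then h else 0)"
    unfolding succ_prob_def by (rule sum.cong[OF refl]) (rule each)
  also have "\<dots> = (\<Sum>x\<in>?G. \<Sum>i\<in>Out. if f x = i then h else 0)" by (rule sum.swap)
  also have "\<dots> = (\<Sum>x\<in>?G. h)"
  proof (rule sum.cong[OF refl])
    fix x assume x: "x \<in> ?G"
    have "(\<Sum>i\<in>Out. if f x = i then h else 0) = (\<Sum>i\<in>Out. if i = f x then h else 0)"
      by (rule sum.cong) auto
    also have "\<dots> = h" using fO[OF x] finO by simp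
    finally show "(\<Sum>i\<in>Out. if f x = i then h else 0) = h" .
  qed
  also have "\<dots> = h * real (card ?G)" by simp
  finally show ?thesis .
qed

lemma opt_gen:
  assumes fin: "\<And>k. k < m \<Longrightarrow> finite (LB k)" and m1: "1 < m" and finO: "finite Out" and OutNE: "Out \<noteq> {}"
    and fO: "\<And>x. x \<in> gbasis m LB \<Longrightarrow> f x \<in> Out"
    and T: "\<And>i X Y. i \<in> Out \<Longrightarrow> X \<in> gbasis m LB \<Longrightarrow> Y \<in> gbasis m LB \<Longrightarrow>
              complex_of_real (\<eta> i) * \<rho> i X Y = complex_of_real (Re (complex_of_real (\<eta> i) * \<rho> i X Y))
              \<and> 0 \<le> Re (complex_of_real (\<eta> i) * \<rho> i X Y) \<and> Re (complex_of_real (\<eta> i) * \<rho> i X Y) \<le> h"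
    and h0: "0 \<le> h"
    and inj1: "\<And>i. i \<in> Out \<Longrightarrow> inj_on (\<lambda>(X, Y). X(1 := Y 1)) {(X, Y). X \<in> gbasis m LB \<and> Y \<in> gbasis m LB \<and> complex_of_real (\<eta> i) * \<rho> i X Y \<noteq> 0}"
    and inj2: "\<And>i. i \<in> Out \<Longrightarrow> inj_on (\<lambda>(X, Y). Y(1 := X 1)) {(X, Y). X \<in> gbasis m LB \<and> Y \<in> gbasis m LB \<and> complex_of_real (\<eta> i) * \<rho> i X Y \<noteq> 0}"
    and diag: "\<And>i x. i \<in> Out \<Longrightarrow> x \<in> gbasis m LB \<Longrightarrow> f x = i \<Longrightarrow> complex_of_real (\<eta> i) * \<rho> i x x = complex_of_real h"
  shows "p_locc m LB Out \<eta> \<rho> = h * real (card (gbasis m LB))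
       \<and> p_sep m LB Out \<eta> \<rho> = h * real (card (gbasis m LB))"
proof -
  let ?G = "gbasis m LB"
  let ?D = "\<lambda>i x y. if x = y \<and> f x = i then (1::complex) else 0"
  have finG: "finite ?G" by (rule finite_gbasis[OF fin])
  have lD: "locc m LB Out ?D" by (rule diag_locc[OF fin OutNE fO])
  have spD: "(\<forall>i\<in>Out. separable m LB (?D i)) \<and> op_eq ?G (\<lambda>x y. \<Sum>i\<in>Out. ?D i x y) idop"
    by (rule locc_sep_povm[OF lD fin finO])
  have sD: "succ_prob ?G Out \<eta> \<rho> ?D = h * real (card ?G)"
    by (rule succ_D[OF finG finO fO diag])
  have up: "succ_prob ?G Out \<eta> \<rho> M \<le> h * real (card ?G)"
    if "\<And>i. i \<in> Out \<Longrightarrow> separable m LB (M i)" "op_eq ?G (\<lambda>x y. \<Sum>i\<in>Out. M i x y) idop" for M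
    by (rule succ_upper[OF fin m1 finO that T h0 inj1 inj2])
  have "p_locc m LB Out \<eta> \<rho> = h * real (card ?G)"
    unfolding p_locc_def
  proof (rule cSup_eq_maximum)
    show "h * real (card ?G) \<in> {succ_prob ?G Out \<eta> \<rho> M |M. locc m LB Out M}"
      unfolding mem_Collect_eq by (rule exI[of _ ?D]) (simp add: sD lD)
    fix z assume "z \<in> {succ_prob ?G Out \<eta> \<rho> M |M. locc m LB Out M}"
    then obtain M where M: "locc m LB Out M" "z = succ_prob ?G Out \<eta> \<rho> M" by blast
    have "(\<forall>i\<in>Out. separable m LB (M i)) \<and> op_eq ?G (\<lambda>x y. \<Sum>i\<in>Out. M i x y) idop"
      by (rule locc_sep_povm[OF M(1) fin finO])
    then show "z \<le> h * real (card ?G)" unfolding M(2) using up by blast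
  qed
  moreover have "p_sep m LB Out \<eta> \<rho> = h * real (card ?G)"
    unfolding p_sep_def
  proof (rule cSup_eq_maximum)
    have "sep_meas m LB Out ?D"
      unfolding sep_meas_def povm_def
    proof (intro conjI ballI)
      fix i assume "i \<in> Out"
      show "psd ?G (?D i)" by (rule psd_D[OF finG])
      show "separable m LB (?D i)" using spD \<open>i \<in> Out\<close> by blast
    next
      show "op_eq ?G (\<lambda>x y. \<Sum>i\<in>Out. ?D i x y) idop" using spD by blast
    qed
    then show "h * real (card ?G) \<in> {succ_prob ?G Out \<eta> \<rho> M |M. sep_meas m LB Out M}"
      unfolding mem_Collect_eq using sD by (intro exI[of _ ?D] conjI) simp_all
    fix z assume "z \<in> {succ_prob ?G Out \<eta> \<rho> M |M. sep_meas m LB Out M}"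
    then obtain M where M: "sep_meas m LB Out M" "z = succ_prob ?G Out \<eta> \<rho> M" by blast
    have "(\<forall>i\<in>Out. separable m LB (M i)) \<and> op_eq ?G (\<lambda>x y. \<Sum>i\<in>Out. M i x y) idop"
      using M(1) unfolding sep_meas_def povm_def by blast
    then show "z \<le> h * real (card ?G)" unfolding M(2) using up by blast
  qed
  ultimately show ?thesis by blast
qed

definition cst :: "nat \<Rightarrow> (nat \<Rightarrow> nat) \<Rightarrow> bool" where
  "cst m x \<longleftrightarrow> (\<forall>k<m. x k = x 0)"

definition ent :: "nat \<Rightarrow> nat \<Rightarrow> nat \<Rightarrow> (nat \<Rightarrow> nat) \<Rightarrow> (nat \<Rightarrow> nat) \<Rightarrow> bool" where
  "ent m d i x y = (if 1 \<le> i \<and> i \<le> d then x = y \<and> cst m x \<and> x 0 = i - 1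
     else if i = d + 1 then x = y \<and> \<not> cst m x else cst m x \<and> cst m y)"

definition fout :: "nat \<Rightarrow> nat \<Rightarrow> (nat \<Rightarrow> nat) \<Rightarrow> nat" where
  "fout m d x = (if cst m x then x 0 + 1 else d + 1)"

lemma G1_0: "x \<in> gbasis m (qudit_LB d) \<Longrightarrow> 0 < m \<Longrightarrow> x 0 < d"
  using gbasis_in[of x m "qudit_LB d" 0] unfolding qudit_LB_def by simp

lemma Psi_G:
  assumes x: "x \<in> gbasis m (qudit_LB d)" and y: "y \<in> gbasis m (qudit_LB d)" and m0: "0 < m"
  shows "Psi m j x y = (if x = y \<and> cst m x \<and> x 0 = j then 1 else 0)"
proof -
  have "((\<forall>k<m. x k = j) \<and> (\<forall>k<m. y k = j)) \<longleftrightarrow> (x = y \<and> cst m x \<and> x 0 = j)"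
  proof
    assume H: "(\<forall>k<m. x k = j) \<and> (\<forall>k<m. y k = j)"
    then have "x = y" using gbasis_eqI[OF x y] by simp
    then show "x = y \<and> cst m x \<and> x 0 = j" using H m0 unfolding cst_def by simp
  next
    assume "x = y \<and> cst m x \<and> x 0 = j"
    then show "(\<forall>k<m. x k = j) \<and> (\<forall>k<m. y k = j)" unfolding cst_def by metis
  qed
  then show ?thesis unfolding Psi_def by simp
qed

lemma sumPsi_G:
  assumes x: "x \<in> gbasis m (qudit_LB d)" and y: "y \<in> gbasis m (qudit_LB d)" and m0: "0 < m"
  shows "(\<Sum>j<d. Psi m j x y) = (if x = y \<and> cst m x then 1 else 0)"
proof -
  have "(\<Sum>j<d. Psi m j x y) = (\<Sum>j<d. if j = x 0 then (if x = y \<and> cst m x then 1 else 0) else 0)"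
    by (rule sum.cong[OF refl]) (auto simp: Psi_G[OF x y m0])
  also have "\<dots> = (if x = y \<and> cst m x then 1 else 0)" using G1_0[OF x m0] by simp
  finally show ?thesis .
qed

lemma Phi_G:
  assumes x: "x \<in> gbasis m (qudit_LB d)" and y: "y \<in> gbasis m (qudit_LB d)" and m0: "0 < m"
  shows "Phi m d x y = complex_of_real (1 / real d) * (if cst m x \<and> cst m y then 1 else 0)"
proof -
  have cx: "(\<forall>k<m. x k = i) \<longleftrightarrow> cst m x \<and> x 0 = i" for i using m0 unfolding cst_def by auto
  have cy: "(\<forall>k<m. y k = i) \<longleftrightarrow> cst m y \<and> y 0 = i" for i using m0 unfolding cst_def by auto
  have "(\<Sum>i<d. \<Sum>j<d. if (\<forall>k<m. x k = i) \<and> (\<forall>k<m. y k = j) then (1::complex) else 0)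
      = (\<Sum>i<d. if i = x 0 then (\<Sum>j<d. if j = y 0 then (if cst m x \<and> cst m y then 1 else 0) else 0) else 0)"
    by (intro sum.cong refl) (auto simp: cx cy)
  also have "\<dots> = (if cst m x \<and> cst m y then 1 else 0)"
    using G1_0[OF x m0] G1_0[OF y m0] by simp
  finally show ?thesis unfolding Phi_def by simp
qed

lemma dm_gt_d:
  assumes m1: "1 < m" and d2: "2 \<le> d"
  shows "real d < real d ^ m"
proof -
  have "real d ^ 2 \<le> real d ^ m" by (rule power_increasing) (use m1 d2 in auto)
  moreover have "real d < real d ^ 2" using d2 by (simp add: power2_eq_square)
  ultimately show ?thesis by linarith
qed

lemma idop_minus_sumPsi:
  assumes x: "x \<in> gbasis m (qudit_LB d)" and y: "y \<in> gbasis m (qudit_LB d)" and m0: "0 < m"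
  shows "idop x y - (\<Sum>j<d. Psi m j x y) = (if x = y \<and> \<not> cst m x then 1 else 0)"
  unfolding sumPsi_G[OF x y m0] idop_def by auto

lemma scal_lemma:
  fixes p q :: real
  assumes "p \<noteq> 0"
  shows "complex_of_real (p / q) * (z / complex_of_real p) = complex_of_real (1 / q) * z"
proof -
  have "complex_of_real p \<noteq> 0" using assms by simp
  then show ?thesis by (simp add: field_simps)
qed

lemma scal_lemma2:
  fixes p q :: real
  assumes "p \<noteq> 0"
  shows "complex_of_real (p / q) * (complex_of_real (1 / p) * z) = complex_of_real (1 / q) * z"
proof -
  have "complex_of_real p \<noteq> 0" using assms by simp
  then show ?thesis by (simp add: field_simps)
qed

lemma ENT:
  assumes x: "x \<in> gbasis m (qudit_LB d)" and y: "y \<in> gbasis m (qudit_LB d)"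
    and m1: "1 < m" and d2: "2 \<le> d" and i: "i \<in> {1..d+2}"
  shows "complex_of_real (ens_eta m d i) * ens_rho m d i x y
       = complex_of_real (1 / (real d ^ m + real d)) * (if ent m d i x y then 1 else 0)"
proof -
  have m0: "0 < m" using m1 by simp
  consider "1 \<le> i \<and> i \<le> d" | "i = d + 1" | "i = d + 2" using i by force
  then show ?thesis
  proof cases
    case 1
    then show ?thesis unfolding ens_eta_def ens_rho_def ent_def by (simp add: Psi_G[OF x y m0])
  next
    case 2
    have ne: "real d ^ m - real d \<noteq> 0" using dm_gt_d[OF m1 d2] by simp
    have "complex_of_real (ens_eta m d i) * ens_rho m d i x y
        = complex_of_real ((real d ^ m - real d) / (real d ^ m + real d)) *
          ((if x = y \<and> \<not> cst m x then 1 else 0) / complex_of_real (real d ^ m - real d))"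
      unfolding ens_eta_def ens_rho_def using 2 by (simp add: idop_minus_sumPsi[OF x y m0])
    also have "\<dots> = complex_of_real (1 / (real d ^ m + real d)) * (if x = y \<and> \<not> cst m x then 1 else 0)"
      by (rule scal_lemma[OF ne])
    finally show ?thesis unfolding ent_def using 2 by simp
  next
    case 3
    have d0: "real d \<noteq> 0" using d2 by simp
    have "complex_of_real (ens_eta m d i) * ens_rho m d i x y
        = complex_of_real (real d / (real d ^ m + real d)) *
          (complex_of_real (1 / real d) * (if cst m x \<and> cst m y then 1 else 0))"
      unfolding ens_eta_def ens_rho_def using 3 by (simp add: Phi_G[OF x y m0])
    also have "\<dots> = complex_of_real (1 / (real d ^ m + real d)) * (if cst m x \<and> cst m y then 1 else 0)"
      by (rule scal_lemma2[OF d0])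
    finally show ?thesis unfolding ent_def using 3 by simp
  qed
qed

lemma fout_range:
  assumes x: "x \<in> gbasis m (qudit_LB d)" and m0: "0 < m"
  shows "fout m d x \<in> {1..d+1}"
  using G1_0[OF x m0] unfolding fout_def by auto

lemma MEAS:
  assumes x: "x \<in> gbasis m (qudit_LB d)" and y: "y \<in> gbasis m (qudit_LB d)"
    and m0: "0 < m" and i: "i \<in> {1..d+2}"
  shows "meas_M m d i x y = (if x = y \<and> fout m d x = i then 1 else 0)"
proof -
  have x0: "x 0 < d" by (rule G1_0[OF x m0])
  consider "1 \<le> i \<and> i \<le> d" | "i = d + 1" | "i = d + 2" using i by force
  then show ?thesis
  proof cases
    case 1
    then show ?thesis unfolding meas_M_def fout_def using x0 by (auto simp: Psi_G[OF x y m0])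
  next
    case 2
    then show ?thesis unfolding meas_M_def fout_def using x0
      by (auto simp: idop_minus_sumPsi[OF x y m0])
  next
    case 3
    then show ?thesis unfolding meas_M_def fout_def zeroop_def using x0 by auto
  qed
qed

lemma ent_diag:
  assumes x: "x \<in> gbasis m (qudit_LB d)" and m0: "0 < m" and "fout m d x = i"
  shows "ent m d i x x"
  using assms G1_0[OF x m0] unfolding fout_def ent_def by (auto split: if_splits)

lemma ent_sym: "ent m d i x y = ent m d i y x"
  unfolding ent_def by auto

lemma ent_inj:
  assumes x: "x \<in> gbasis m (qudit_LB d)" and y: "y \<in> gbasis m (qudit_LB d)"
    and x': "x' \<in> gbasis m (qudit_LB d)" and y': "y' \<in> gbasis m (qudit_LB d)"
    and m1: "1 < m" and e: "ent m d i x y" and e': "ent m d i x' y'"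
    and eq: "x(1 := y 1) = x'(1 := y' 1)"
  shows "x = x' \<and> y = y'"
proof (cases "(1 \<le> i \<and> i \<le> d) \<or> i = d + 1")
  case True
  have "x = y" using True e unfolding ent_def by (auto split: if_splits)
  moreover have "x' = y'" using True e' unfolding ent_def by (auto split: if_splits)
  ultimately show ?thesis using eq by simp
next
  case False
  then have c: "cst m x" "cst m y" "cst m x'" "cst m y'"
    using e e' unfolding ent_def by (auto split: if_splits)
  have x0: "x 0 = x' 0" using fun_cong[OF eq, of 0] by simp
  have y1: "y 1 = y' 1" using fun_cong[OF eq, of 1] by simp
  have "x = x'"
    by (rule gbasis_eqI[OF x x']) (metis c(1) c(3) cst_def x0)
  moreover have "y = y'"
    by (rule gbasis_eqI[OF y y']) (metis c(2) c(4) cst_def y1 m1)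
  ultimately show ?thesis by simp
qed

lemma finite_qudit: "finite (qudit_LB d k)" unfolding qudit_LB_def by simp

lemma card_G1: "card (gbasis m (qudit_LB d)) = d ^ m"
  unfolding gbasis_def qudit_LB_def by (simp add: card_PiE)

lemma T_cond:
  assumes "T = complex_of_real h * (if P then 1 else 0)" "0 \<le> h"
  shows "T = complex_of_real (Re T) \<and> 0 \<le> Re T \<and> Re T \<le> h"
  using assms by auto

lemma single_opt:
  assumes m1: "1 < m" and d2: "2 \<le> d"
  shows "p_locc m (qudit_LB d) {1..d+2} (ens_eta m d) (ens_rho m d)
           = 1 / (real d ^ m + real d) * real (d ^ m)"
proof -
  let ?G = "gbasis m (qudit_LB d)"
  let ?h = "1 / (real d ^ m + real d)"
  have m0: "0 < m" using m1 by simp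
  have h0: "0 < ?h" using d2 by (simp add: add_pos_nonneg)
  have ENT': "complex_of_real (ens_eta m d i) * ens_rho m d i x y = complex_of_real ?h * (if ent m d i x y then 1 else 0)"
    if "i \<in> {1..d+2}" "x \<in> ?G" "y \<in> ?G" for i x y
    by (rule ENT[OF that(2) that(3) m1 d2 that(1)])
  have nz: "ent m d i x y" if "i \<in> {1..d+2}" "x \<in> ?G" "y \<in> ?G" "complex_of_real (ens_eta m d i) * ens_rho m d i x y \<noteq> 0" for i x y
    using that ENT'[OF that(1-3)] by (auto split: if_splits)
  have "p_locc m (qudit_LB d) {1..d+2} (ens_eta m d) (ens_rho m d) = ?h * real (card ?G)
      \<and> p_sep m (qudit_LB d) {1..d+2} (ens_eta m d) (ens_rho m d) = ?h * real (card ?G)"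
  proof (rule opt_gen[where f="fout m d"])
    show "\<And>k. k < m \<Longrightarrow> finite (qudit_LB d k)" by (rule finite_qudit)
    show "1 < m" by (rule m1)
    show "finite {1..d+2}" by simp
    show "{1..d+2} \<noteq> {}" by simp
    show "\<And>x. x \<in> ?G \<Longrightarrow> fout m d x \<in> {1..d+2}" using fout_range[OF _ m0] by fastforce
    show "\<And>i X Y. i \<in> {1..d+2} \<Longrightarrow> X \<in> ?G \<Longrightarrow> Y \<in> ?G \<Longrightarrow>
          complex_of_real (ens_eta m d i) * ens_rho m d i X Y = complex_of_real (Re (complex_of_real (ens_eta m d i) * ens_rho m d i X Y))
          \<and> 0 \<le> Re (complex_of_real (ens_eta m d i) * ens_rho m d i X Y) \<and> Re (complex_of_real (ens_eta m d i) * ens_rho m d i X Y) \<le> ?h"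
      using T_cond ENT' h0 by (metis less_imp_le)
    show "0 \<le> ?h" using h0 by simp
    show "\<And>i. i \<in> {1..d+2} \<Longrightarrow> inj_on (\<lambda>(X, Y). X(1 := Y 1)) {(X, Y). X \<in> ?G \<and> Y \<in> ?G \<and> complex_of_real (ens_eta m d i) * ens_rho m d i X Y \<noteq> 0}"
    proof (rule inj_onI, clarify)
      fix i x y x' y'
      assume i: "i \<in> {1..d+2}" and x: "x \<in> ?G" and y: "y \<in> ?G" and x': "x' \<in> ?G" and y': "y' \<in> ?G"
        and n1: "complex_of_real (ens_eta m d i) * ens_rho m d i x y \<noteq> 0"
        and n2: "complex_of_real (ens_eta m d i) * ens_rho m d i x' y' \<noteq> 0"
        and eq: "x(1 := y 1) = x'(1 := y' 1)"
      show "x = x' \<and> y = y'"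
        by (rule ent_inj[OF x y x' y' m1 nz[OF i x y n1] nz[OF i x' y' n2] eq])
    qed
    show "\<And>i. i \<in> {1..d+2} \<Longrightarrow> inj_on (\<lambda>(X, Y). Y(1 := X 1)) {(X, Y). X \<in> ?G \<and> Y \<in> ?G \<and> complex_of_real (ens_eta m d i) * ens_rho m d i X Y \<noteq> 0}"
    proof (rule inj_onI, clarify)
      fix i x y x' y'
      assume i: "i \<in> {1..d+2}" and x: "x \<in> ?G" and y: "y \<in> ?G" and x': "x' \<in> ?G" and y': "y' \<in> ?G"
        and n1: "complex_of_real (ens_eta m d i) * ens_rho m d i x y \<noteq> 0"
        and n2: "complex_of_real (ens_eta m d i) * ens_rho m d i x' y' \<noteq> 0"
        and eq: "y(1 := x 1) = y'(1 := x' 1)"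
      have e1: "ent m d i y x" using nz[OF i x y n1] ent_sym by metis
      have e2: "ent m d i y' x'" using nz[OF i x' y' n2] ent_sym by metis
      show "x = x' \<and> y = y'"
        using ent_inj[OF y x y' x' m1 e1 e2 eq] by simp
    qed
    show "\<And>i x. i \<in> {1..d+2} \<Longrightarrow> x \<in> ?G \<Longrightarrow> fout m d x = i \<Longrightarrow>
          complex_of_real (ens_eta m d i) * ens_rho m d i x x = complex_of_real ?h"
      using ENT' ent_diag[OF _ m0] by simp
  qed
  then show ?thesis unfolding card_G1 by simp
qed

definition foutL :: "nat \<Rightarrow> nat \<Rightarrow> nat \<Rightarrow> (nat \<Rightarrow> nat \<Rightarrow> nat) \<Rightarrow> (nat \<Rightarrow> nat)" where
  "foutL m d L X = (\<lambda>l. if l < L then fout m d (copy_of m l X) else undefined)"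

lemma GL_in: "X \<in> gbasis m (seq_LB d L) \<Longrightarrow> k < m \<Longrightarrow> l < L \<Longrightarrow> X k l < d"
  using gbasis_in[of X m "seq_LB d L" k] unfolding seq_LB_def by (auto simp: PiE_iff)

lemma GL_out: "X \<in> gbasis m (seq_LB d L) \<Longrightarrow> k < m \<Longrightarrow> \<not> l < L \<Longrightarrow> X k l = undefined"
  using gbasis_in[of X m "seq_LB d L" k] unfolding seq_LB_def by (auto simp: PiE_iff extensional_def)

lemma copy_in:
  assumes X: "X \<in> gbasis m (seq_LB d L)" and l: "l < L"
  shows "copy_of m l X \<in> gbasis m (qudit_LB d)"
  unfolding gbasis_def qudit_LB_def copy_of_def using GL_in[OF X _ l] by (auto simp: PiE_iff extensional_def)

lemma copy_upd:
  assumes "1 < m"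
  shows "copy_of m l (X(1 := Y 1)) = (copy_of m l X)(1 := copy_of m l Y 1)"
  unfolding copy_of_def using assms by (auto simp: fun_eq_iff)

lemma GL_eq:
  assumes X: "X \<in> gbasis m (seq_LB d L)" and Y: "Y \<in> gbasis m (seq_LB d L)"
  shows "X = Y \<longleftrightarrow> (\<forall>l<L. copy_of m l X = copy_of m l Y)"
proof
  assume H: "\<forall>l<L. copy_of m l X = copy_of m l Y"
  show "X = Y"
  proof (rule gbasis_eqI[OF X Y])
    fix k assume k: "k < m"
    show "X k = Y k"
    proof
      fix l show "X k l = Y k l"
      proof (cases "l < L")
        case True
        then show ?thesis using fun_cong[OF H[rule_format, OF True], of k] k unfolding copy_of_def by simp
      next
        case False
        then show ?thesis using GL_out[OF X k False] GL_out[OF Y k False] by simp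
      qed
    qed
  qed
qed simp

lemma finite_seqLB: "finite (seq_LB d L k)" unfolding seq_LB_def by (simp add: finite_PiE)

lemma card_GL: "card (gbasis m (seq_LB d L)) = (d ^ L) ^ m"
  unfolding gbasis_def seq_LB_def by (simp add: card_PiE)

lemma prod_ind: "(\<Prod>l<(L::nat). if P l then (1::complex) else 0) = (if \<forall>l<L. P l then 1 else 0)"
  by (induction L) (auto simp: less_Suc_eq)

lemma ENT_L:
  assumes X: "X \<in> gbasis m (seq_LB d L)" and Y: "Y \<in> gbasis m (seq_LB d L)"
    and m1: "1 < m" and d2: "2 \<le> d" and c: "c \<in> seq_outcomes d L"
  shows "complex_of_real (seq_eta (ens_eta m d) L c) * seq_op m L (ens_rho m d) c X Y
       = complex_of_real (1 / (real d ^ m + real d) ^ L) * (if \<forall>l<L. ent m d (c l) (copy_of m l X) (copy_of m l Y) then 1 else 0)"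
proof -
  have cl: "c l \<in> {1..d+2}" if "l < L" for l using c that unfolding seq_outcomes_def by (auto simp: PiE_iff)
  have "complex_of_real (seq_eta (ens_eta m d) L c) * seq_op m L (ens_rho m d) c X Y
      = (\<Prod>l<L. complex_of_real (ens_eta m d (c l)) * ens_rho m d (c l) (copy_of m l X) (copy_of m l Y))"
    unfolding seq_eta_def seq_op_def by (simp add: prod.distrib)
  also have "\<dots> = (\<Prod>l<L. complex_of_real (1 / (real d ^ m + real d)) * (if ent m d (c l) (copy_of m l X) (copy_of m l Y) then 1 else 0))"
    by (rule prod.cong[OF refl]) (simp add: ENT[OF copy_in[OF X] copy_in[OF Y] m1 d2 cl])
  also have "\<dots> = complex_of_real (1 / (real d ^ m + real d)) ^ L * (\<Prod>l<L. if ent m d (c l) (copy_of m l X) (copy_of m l Y) then 1 else 0)"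
    by (simp only: prod.distrib prod_constant card_lessThan)
  also have "\<dots> = complex_of_real (1 / (real d ^ m + real d) ^ L) * (if \<forall>l<L. ent m d (c l) (copy_of m l X) (copy_of m l Y) then 1 else 0)"
    by (simp add: prod_ind power_one_over)
  finally show ?thesis .
qed

lemma MEAS_L:
  assumes X: "X \<in> gbasis m (seq_LB d L)" and Y: "Y \<in> gbasis m (seq_LB d L)"
    and m1: "1 < m" and c: "c \<in> seq_outcomes d L"
  shows "seq_op m L (meas_M m d) c X Y = (if X = Y \<and> foutL m d L X = c then 1 else 0)"
proof -
  have m0: "0 < m" using m1 by simp
  have cl: "c l \<in> {1..d+2}" if "l < L" for l using c that unfolding seq_outcomes_def by (auto simp: PiE_iff)
  have "seq_op m L (meas_M m d) c X Y = (\<Prod>l<L. if copy_of m l X = copy_of m l Y \<and> fout m d (copy_of m l X) = c l then 1 else 0)"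
    unfolding seq_op_def by (rule prod.cong[OF refl]) (simp add: MEAS[OF copy_in[OF X] copy_in[OF Y] m0 cl])
  also have "\<dots> = (if \<forall>l<L. copy_of m l X = copy_of m l Y \<and> fout m d (copy_of m l X) = c l then 1 else 0)"
    by (rule prod_ind)
  also have "(\<forall>l<L. copy_of m l X = copy_of m l Y \<and> fout m d (copy_of m l X) = c l) \<longleftrightarrow> (X = Y \<and> foutL m d L X = c)"
  proof -
    have "foutL m d L X = c \<longleftrightarrow> (\<forall>l<L. fout m d (copy_of m l X) = c l)"
    proof
      assume "foutL m d L X = c" then show "\<forall>l<L. fout m d (copy_of m l X) = c l" unfolding foutL_def by auto
    next
      assume H: "\<forall>l<L. fout m d (copy_of m l X) = c l"
      show "foutL m d L X = c"
      proof
        fix l show "foutL m d L X l = c l"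
          using H c unfolding foutL_def seq_outcomes_def by (auto simp: PiE_iff extensional_def)
      qed
    qed
    then show ?thesis using GL_eq[OF X Y] by blast
  qed
  finally show ?thesis .
qed

lemma ent_inj_L:
  assumes X: "X \<in> gbasis m (seq_LB d L)" and Y: "Y \<in> gbasis m (seq_LB d L)"
    and X': "X' \<in> gbasis m (seq_LB d L)" and Y': "Y' \<in> gbasis m (seq_LB d L)"
    and m1: "1 < m"
    and e: "\<forall>l<L. ent m d (c l) (copy_of m l X) (copy_of m l Y)"
    and e': "\<forall>l<L. ent m d (c l) (copy_of m l X') (copy_of m l Y')"
    and eq: "X(1 := Y 1) = X'(1 := Y' 1)"
  shows "X = X' \<and> Y = Y'"
proof -
  have "copy_of m l X = copy_of m l X' \<and> copy_of m l Y = copy_of m l Y'" if l: "l < L" for l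
  proof (rule ent_inj[OF copy_in[OF X l] copy_in[OF Y l] copy_in[OF X' l] copy_in[OF Y' l] m1])
    show "ent m d (c l) (copy_of m l X) (copy_of m l Y)" using e l by blast
    show "ent m d (c l) (copy_of m l X') (copy_of m l Y')" using e' l by blast
    show "(copy_of m l X)(1 := copy_of m l Y 1) = (copy_of m l X')(1 := copy_of m l Y' 1)"
      using arg_cong[OF eq, of "copy_of m l"] unfolding copy_upd[OF m1] .
  qed
  then show ?thesis using GL_eq[OF X X'] GL_eq[OF Y Y'] by blast
qed

lemma foutL_in:
  assumes X: "X \<in> gbasis m (seq_LB d L)" and m0: "0 < m"
  shows "foutL m d L X \<in> seq_outcomes d L"
  unfolding seq_outcomes_def
proof (rule PiE_I)
  fix l assume "l \<in> {..<L}"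
  then have l: "l < L" by simp
  have "fout m d (copy_of m l X) \<in> {1..d+1}" by (rule fout_range[OF copy_in[OF X l] m0])
  then show "foutL m d L X l \<in> {1..d+2}" unfolding foutL_def using l by auto
next
  fix l assume "l \<notin> {..<L}"
  then show "foutL m d L X l = undefined" unfolding foutL_def by simp
qed

lemma multi_opt:
  assumes m1: "1 < m" and d2: "2 \<le> d"
  shows "p_locc m (seq_LB d L) (seq_outcomes d L) (seq_eta (ens_eta m d) L) (seq_op m L (ens_rho m d))
           = 1 / (real d ^ m + real d) ^ L * real (card (gbasis m (seq_LB d L)))
       \<and> p_sep m (seq_LB d L) (seq_outcomes d L) (seq_eta (ens_eta m d) L) (seq_op m L (ens_rho m d))
           = 1 / (real d ^ m + real d) ^ L * real (card (gbasis m (seq_LB d L)))"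
proof -
  let ?G = "gbasis m (seq_LB d L)"
  let ?h = "1 / (real d ^ m + real d) ^ L"
  let ?eta = "seq_eta (ens_eta m d) L" and ?rho = "seq_op m L (ens_rho m d)"
  have m0: "0 < m" using m1 by simp
  have h0: "0 < ?h" using d2 by (simp add: add_pos_nonneg)
  have ENT': "complex_of_real (?eta c) * ?rho c X Y = complex_of_real ?h * (if \<forall>l<L. ent m d (c l) (copy_of m l X) (copy_of m l Y) then 1 else 0)"
    if "c \<in> seq_outcomes d L" "X \<in> ?G" "Y \<in> ?G" for c X Y
    by (rule ENT_L[OF that(2) that(3) m1 d2 that(1)])
  have nz: "\<forall>l<L. ent m d (c l) (copy_of m l X) (copy_of m l Y)"
    if "c \<in> seq_outcomes d L" "X \<in> ?G" "Y \<in> ?G" "complex_of_real (?eta c) * ?rho c X Y \<noteq> 0" for c X Y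
    using that(4) ENT'[OF that(1-3)] by (auto split: if_splits)
  show ?thesis
  proof (rule opt_gen[where f="foutL m d L"])
    show "\<And>k. k < m \<Longrightarrow> finite (seq_LB d L k)" by (rule finite_seqLB)
    show "1 < m" by (rule m1)
    show "finite (seq_outcomes d L)" unfolding seq_outcomes_def by (simp add: finite_PiE)
    have "(\<lambda>l. if l < L then 1 else undefined) \<in> seq_outcomes d L"
      unfolding seq_outcomes_def by (auto simp: PiE_iff extensional_def)
    then show "seq_outcomes d L \<noteq> {}" by blast
    show "\<And>x. x \<in> ?G \<Longrightarrow> foutL m d L x \<in> seq_outcomes d L" using foutL_in[OF _ m0] by blast
    show "\<And>i X Y. i \<in> seq_outcomes d L \<Longrightarrow> X \<in> ?G \<Longrightarrow> Y \<in> ?G \<Longrightarrow>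
          complex_of_real (?eta i) * ?rho i X Y = complex_of_real (Re (complex_of_real (?eta i) * ?rho i X Y))
          \<and> 0 \<le> Re (complex_of_real (?eta i) * ?rho i X Y) \<and> Re (complex_of_real (?eta i) * ?rho i X Y) \<le> ?h"
    proof -
      fix i X Y assume i: "i \<in> seq_outcomes d L" and X: "X \<in> ?G" and Y: "Y \<in> ?G"
      show "complex_of_real (?eta i) * ?rho i X Y = complex_of_real (Re (complex_of_real (?eta i) * ?rho i X Y))
          \<and> 0 \<le> Re (complex_of_real (?eta i) * ?rho i X Y) \<and> Re (complex_of_real (?eta i) * ?rho i X Y) \<le> ?h"
        by (rule T_cond[OF ENT'[OF i X Y] less_imp_le[OF h0]])
    qed
    show "0 \<le> ?h" using h0 by simp
    show "\<And>i. i \<in> seq_outcomes d L \<Longrightarrow> inj_on (\<lambda>(X, Y). X(1 := Y 1)) {(X, Y). X \<in> ?G \<and> Y \<in> ?G \<and> complex_of_real (?eta i) * ?rho i X Y \<noteq> 0}"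
    proof (rule inj_onI, clarify)
      fix i X Y X' Y'
      assume i: "i \<in> seq_outcomes d L" and X: "X \<in> ?G" and Y: "Y \<in> ?G" and X': "X' \<in> ?G" and Y': "Y' \<in> ?G"
        and n1: "complex_of_real (?eta i) * ?rho i X Y \<noteq> 0"
        and n2: "complex_of_real (?eta i) * ?rho i X' Y' \<noteq> 0"
        and eq: "X(1 := Y 1) = X'(1 := Y' 1)"
      show "X = X' \<and> Y = Y'"
        by (rule ent_inj_L[OF X Y X' Y' m1 nz[OF i X Y n1] nz[OF i X' Y' n2] eq])
    qed
    show "\<And>i. i \<in> seq_outcomes d L \<Longrightarrow> inj_on (\<lambda>(X, Y). Y(1 := X 1)) {(X, Y). X \<in> ?G \<and> Y \<in> ?G \<and> complex_of_real (?eta i) * ?rho i X Y \<noteq> 0}"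
    proof (rule inj_onI, clarify)
      fix i X Y X' Y'
      assume i: "i \<in> seq_outcomes d L" and X: "X \<in> ?G" and Y: "Y \<in> ?G" and X': "X' \<in> ?G" and Y': "Y' \<in> ?G"
        and n1: "complex_of_real (?eta i) * ?rho i X Y \<noteq> 0"
        and n2: "complex_of_real (?eta i) * ?rho i X' Y' \<noteq> 0"
        and eq: "Y(1 := X 1) = Y'(1 := X' 1)"
      have e1: "\<forall>l<L. ent m d (i l) (copy_of m l Y) (copy_of m l X)" using nz[OF i X Y n1] ent_sym by metis
      have e2: "\<forall>l<L. ent m d (i l) (copy_of m l Y') (copy_of m l X')" using nz[OF i X' Y' n2] ent_sym by metis
      show "X = X' \<and> Y = Y'"
        using ent_inj_L[OF Y X Y' X' m1 e1 e2 eq] by simp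
    qed
    show "\<And>i x. i \<in> seq_outcomes d L \<Longrightarrow> x \<in> ?G \<Longrightarrow> foutL m d L x = i \<Longrightarrow>
          complex_of_real (?eta i) * ?rho i x x = complex_of_real ?h"
    proof -
      fix i x assume i: "i \<in> seq_outcomes d L" and x: "x \<in> ?G" and f: "foutL m d L x = i"
      have "\<forall>l<L. ent m d (i l) (copy_of m l x) (copy_of m l x)"
      proof (intro allI impI)
        fix l assume l: "l < L"
        have "fout m d (copy_of m l x) = i l" using f l unfolding foutL_def by auto
        then show "ent m d (i l) (copy_of m l x) (copy_of m l x)" by (rule ent_diag[OF copy_in[OF x l] m0])
      qed
      then show "complex_of_real (?eta i) * ?rho i x x = complex_of_real ?h" using ENT'[OF i x x] by simp
    qed
  qed
qed

lemma sep_dual_L: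
  assumes m1: "1 < m" and d2: "2 \<le> d" and c: "c \<in> seq_outcomes d L"
  shows "sep_dual m (seq_LB d L)
              (\<lambda>X Y. seqH m d L X Y
                 - of_real (seq_eta (ens_eta m d) L c) * seq_op m L (ens_rho m d) c X Y)"
proof -
  let ?G = "gbasis m (seq_LB d L)"
  let ?h = "1 / (real d ^ m + real d) ^ L"
  let ?T = "\<lambda>X Y. complex_of_real (seq_eta (ens_eta m d) L c) * seq_op m L (ens_rho m d) c X Y"
  have m0: "0 < m" using m1 by simp
  have h0: "0 < ?h" using d2 by (simp add: add_pos_nonneg)
  have ENT': "?T X Y = complex_of_real ?h * (if \<forall>l<L. ent m d (c l) (copy_of m l X) (copy_of m l Y) then 1 else 0)"
    if "X \<in> ?G" "Y \<in> ?G" for X Y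
    by (rule ENT_L[OF that(1) that(2) m1 d2 c])
  have nz: "\<forall>l<L. ent m d (c l) (copy_of m l X) (copy_of m l Y)"
    if "X \<in> ?G" "Y \<in> ?G" "?T X Y \<noteq> 0" for X Y
    using that(3) ENT'[OF that(1-2)] by (auto split: if_splits)
  have "sep_dual m (seq_LB d L) (\<lambda>X Y. complex_of_real ?h * idop X Y - ?T X Y)"
  proof (rule sep_dual_gen)
    show "\<And>k. k < m \<Longrightarrow> finite (seq_LB d L k)" by (rule finite_seqLB)
    show "1 < m" by (rule m1)
    show "\<And>X Y. X \<in> ?G \<Longrightarrow> Y \<in> ?G \<Longrightarrow> ?T X Y = complex_of_real (Re (?T X Y)) \<and> 0 \<le> Re (?T X Y) \<and> Re (?T X Y) \<le> ?h"
      by (rule T_cond[OF ENT' less_imp_le[OF h0]])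
    show "0 \<le> ?h" using h0 by simp
    show "inj_on (\<lambda>(X, Y). X(1 := Y 1)) {(X, Y). X \<in> ?G \<and> Y \<in> ?G \<and> ?T X Y \<noteq> 0}"
    proof (rule inj_onI, clarify)
      fix X Y X' Y'
      assume X: "X \<in> ?G" and Y: "Y \<in> ?G" and X': "X' \<in> ?G" and Y': "Y' \<in> ?G"
        and n1: "?T X Y \<noteq> 0" and n2: "?T X' Y' \<noteq> 0"
        and eq: "X(1 := Y 1) = X'(1 := Y' 1)"
      show "X = X' \<and> Y = Y'"
        by (rule ent_inj_L[OF X Y X' Y' m1 nz[OF X Y n1] nz[OF X' Y' n2] eq])
    qed
    show "inj_on (\<lambda>(X, Y). Y(1 := X 1)) {(X, Y). X \<in> ?G \<and> Y \<in> ?G \<and> ?T X Y \<noteq> 0}"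
    proof (rule inj_onI, clarify)
      fix X Y X' Y'
      assume X: "X \<in> ?G" and Y: "Y \<in> ?G" and X': "X' \<in> ?G" and Y': "Y' \<in> ?G"
        and n1: "?T X Y \<noteq> 0" and n2: "?T X' Y' \<noteq> 0"
        and eq: "Y(1 := X 1) = Y'(1 := X' 1)"
      have e1: "\<forall>l<L. ent m d (c l) (copy_of m l Y) (copy_of m l X)"
        using nz[OF X Y n1] by (simp add: ent_sym)
      have e2: "\<forall>l<L. ent m d (c l) (copy_of m l Y') (copy_of m l X')"
        using nz[OF X' Y' n2] by (simp add: ent_sym)
      show "X = X' \<and> Y = Y'"
        using ent_inj_L[OF Y X Y' X' m1 e1 e2 eq] by simp
    qed
    show "herm ?G ?T"
      unfolding herm_def
    proof (intro ballI)
      fix X Y assume X: "X \<in> ?G" and Y: "Y \<in> ?G"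
      have s: "(\<forall>l<L. ent m d (c l) (copy_of m l X) (copy_of m l Y)) = (\<forall>l<L. ent m d (c l) (copy_of m l Y) (copy_of m l X))"
        by (simp add: ent_sym)
      show "?T X Y = cnj (?T Y X)"
        unfolding ENT'[OF X Y] ENT'[OF Y X] s by simp
    qed
  qed
  then show ?thesis unfolding seqH_def .
qed

lemma trace_L:
  assumes m1: "1 < m" and d2: "2 \<le> d" and c: "c \<in> seq_outcomes d L"
  shows "tr (gbasis m (seq_LB d L))
              (mmult (gbasis m (seq_LB d L)) (seq_op m L (meas_M m d) c)
                 (\<lambda>X Y. seqH m d L X Y
                    - of_real (seq_eta (ens_eta m d) L c) * seq_op m L (ens_rho m d) c X Y)) = 0"
  unfolding tr_def mmult_def
proof (intro sum.neutral ballI)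
  let ?G = "gbasis m (seq_LB d L)"
  have m0: "0 < m" using m1 by simp
  fix X Y assume X: "X \<in> ?G" and Y: "Y \<in> ?G"
  show "seq_op m L (meas_M m d) c X Y *
        (seqH m d L Y X - complex_of_real (seq_eta (ens_eta m d) L c) * seq_op m L (ens_rho m d) c Y X) = 0"
  proof (cases "X = Y \<and> foutL m d L X = c")
    case True
    have "\<forall>l<L. ent m d (c l) (copy_of m l X) (copy_of m l X)"
    proof (intro allI impI)
      fix l assume l: "l < L"
      have "fout m d (copy_of m l X) = c l" using True l unfolding foutL_def by auto
      then show "ent m d (c l) (copy_of m l X) (copy_of m l X)" by (rule ent_diag[OF copy_in[OF X l] m0])
    qed
    then show ?thesis using True ENT_L[OF X X m1 d2 c] unfolding seqH_def idop_def by simp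
  next
    case False
    then show ?thesis by (simp only: MEAS_L[OF X Y m1 c] if_not_P[OF False] if_False mult_zero_left)
  qed
qed

lemma single_locc:
  assumes m1: "1 < m"
  shows "locc m (qudit_LB d) {1..d+2} (meas_M m d)"
proof (rule locc_cong)
  have m0: "0 < m" using m1 by simp
  show "locc m (qudit_LB d) {1..d+2} (\<lambda>i x y. if x = y \<and> fout m d x = i then 1 else 0)"
  proof (rule diag_locc)
    show "\<And>k. k < m \<Longrightarrow> finite (qudit_LB d k)" by (rule finite_qudit)
    show "{1..d+2} \<noteq> {}" by simp
    show "\<And>x. x \<in> gbasis m (qudit_LB d) \<Longrightarrow> fout m d x \<in> {1..d+2}"
      using fout_range[OF _ m0] by fastforce
  qed
  show "\<And>i. i \<in> {1..d+2} \<Longrightarrow> op_eq (gbasis m (qudit_LB d)) (meas_M m d i) (\<lambda>x y. if x = y \<and> fout m d x = i then 1 else 0)"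
    unfolding op_eq_def using MEAS[OF _ _ m0] by blast
qed

theorem mainTheorem8:
  fixes m d L :: nat
  assumes "2 \<le> m" and "2 \<le> d" and "2 \<le> L"
  shows "(\<Prod>l<L. p_locc m (qudit_LB d) {1..d+2} (ens_eta m d) (ens_rho m d))
           = p_locc m (seq_LB d L) (seq_outcomes d L)
               (seq_eta (ens_eta m d) L) (seq_op m L (ens_rho m d))
       \<and> p_locc m (seq_LB d L) (seq_outcomes d L)
               (seq_eta (ens_eta m d) L) (seq_op m L (ens_rho m d))
           = p_sep m (seq_LB d L) (seq_outcomes d L)
               (seq_eta (ens_eta m d) L) (seq_op m L (ens_rho m d))
       \<and> locc m (qudit_LB d) {1..d+2} (meas_M m d)
       \<and> (\<forall>c \<in> seq_outcomes d L.
            sep_dual m (seq_LB d L)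
              (\<lambda>X Y. seqH m d L X Y
                 - of_real (seq_eta (ens_eta m d) L c) * seq_op m L (ens_rho m d) c X Y)
          \<and> tr (gbasis m (seq_LB d L))
              (mmult (gbasis m (seq_LB d L)) (seq_op m L (meas_M m d) c)
                 (\<lambda>X Y. seqH m d L X Y
                    - of_real (seq_eta (ens_eta m d) L c) * seq_op m L (ens_rho m d) c X Y)) = 0)"
proof -
  have m1: "1 < m" using assms(1) by simp
  have d2: "2 \<le> d" by (rule assms(2))
  have S: "p_locc m (qudit_LB d) {1..d+2} (ens_eta m d) (ens_rho m d) = 1 / (real d ^ m + real d) * real (d ^ m)"
    by (rule single_opt[OF m1 d2])
  note Mopt = multi_opt[OF m1 d2, of L]
  have "(\<Prod>l<L. p_locc m (qudit_LB d) {1..d+2} (ens_eta m d) (ens_rho m d))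
      = (1 / (real d ^ m + real d) * real (d ^ m)) ^ L"
    unfolding S by simp
  also have "\<dots> = 1 / (real d ^ m + real d) ^ L * real (card (gbasis m (seq_LB d L)))"
  proof -
    have "(1 / (real d ^ m + real d) * real (d ^ m)) ^ L = (1 / (real d ^ m + real d)) ^ L * real (d ^ m) ^ L"
      by (rule power_mult_distrib)
    also have "(1 / (real d ^ m + real d)) ^ L = 1 / (real d ^ m + real d) ^ L" by (rule power_one_over)
    also have "real (d ^ m) ^ L = real ((d ^ L) ^ m)"
      by (simp only: of_nat_power[symmetric] power_mult[symmetric] mult.commute)
    finally show ?thesis unfolding card_GL .
  qed
  finally have C1: "(\<Prod>l<L. p_locc m (qudit_LB d) {1..d+2} (ens_eta m d) (ens_rho m d))
      = p_locc m (seq_LB d L) (seq_outcomes d L) (seq_eta (ens_eta m d) L) (seq_op m L (ens_rho m d))"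
    using Mopt by simp
  show ?thesis
    using C1 Mopt single_locc[OF m1] sep_dual_L[OF m1 d2] trace_L[OF m1 d2] by simp
qed

end
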